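(* Let $k,l\in\mathbb N_0^2$ with $k_1\neq l_1$ and $k_2\neq l_2$, and let $\xi_k=a_ke_k+\overline{a_k}e_{-k}+(-1)^{k_2+1}\overline{a_k}e_{\bar k}+(-1)^{k_2+1}a_ke_{-\bar k}$ and $\eta_l=b_le_l+\overline{b_l}e_{-l}+(-1)^{l_2+1}\overline{b_l}e_{\bar l}+(-1)^{l_2+1}b_le_{-\bar l}$ (with $a_k,b_l\in\mathbb C$) be nonzero. Then the sectional curvature of $\mathrm{SDiff}(\mathbb K)$ in the plane spanned by $\xi_k,\eta_l$ is $$C(\xi_k,\eta_l)=-\frac{1}{4S_{\mathbb T}\|k\|^2\|l\|^2}\Big(\frac{(k\times l)^4}{\|k+l\|^2}+\frac{(k\times l)^4}{\|k-l\|^2}+\frac{(k\times\bar l)^4}{\|k+\bar l\|^2}+\frac{(k\times\bar l)^4}{\|k-\bar l\|^2}\Big),$$ and in particular $-\min\{\|k\|^2,\|l\|^2\}/S_{\mathbb T}\le C(\xi_k,\eta_l)<0$.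
   Context: $\mathbb T=\mathbb R^2/(2\pi\mathbb Z)^2$, area $S_{\mathbb T}=4\pi^2$, $I(x_1,x_2)=(2\pi-x_1,\pi+x_2)$, $\mathbb K=\mathbb T/I$. The Lie algebra of $\mathrm{SDiff}(\mathbb K)$ is identified with the real smooth zero-mean functions $f$ on $\mathbb T$ with $f\circ I=-f$, with bracket $\{f,g\}=\partial_{x_2}f\partial_{x_1}g-\partial_{x_1}f\partial_{x_2}g$ and inner product $\langle f,g\rangle=\int_{\mathbb T}\nabla f\cdot\nabla g\,dx_1dx_2$ (right-invariant $L^2$ metric, norms computed on $\mathbb T$). Sectional curvature: $\langle B(u,v),w\rangle=\langle u,\{v,w\}\rangle$, $\nabla_uv=\frac12(\{u,v\}-B(u,v)-B(v,u))$, $R(u,v)w=-\nabla_u\nabla_vw+\nabla_v\nabla_uw+\nabla_{\{u,v\}}w$, $C(u,v)=\langle R(u,v)u,v\rangle/(\langle u,u\rangle\langle v,v\rangle-\langle u,v\rangle^2)$. Notation: $e_k=e^{i(k_1x_1+k_2x_2)}$, $\bar k=(k_1,-k_2)$, $\|k\|^2=k_1^2+k_2^2$, $k\times l=k_1l_2-k_2l_1$. *)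

theory Defs
  imports "HOL-Analysis.Analysis"
begin

text \<open>Real functions on the torus are modelled as (2pi,2pi)-periodic functions on R^2.\<close>
type_synonym fn = "real \<times> real \<Rightarrow> real"

definition pd1 :: "fn \<Rightarrow> fn" where
  "pd1 f = (\<lambda>x. frechet_derivative f (at x) (1, 0))"

definition pd2 :: "fn \<Rightarrow> fn" where
  "pd2 f = (\<lambda>x. frechet_derivative f (at x) (0, 1))"

definition pd :: "bool \<Rightarrow> fn \<Rightarrow> fn" where
  "pd b f = (if b then pd2 f else pd1 f)"

text \<open>C-infinity: every iterated partial derivative (including f itself) is differentiable.\<close>
definition smooth_fn :: "fn \<Rightarrow> bool" where
  "smooth_fn f \<longleftrightarrow> (\<forall>ds::bool list. \<forall>x. foldr pd ds f differentiable (at x))"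

definition torus_box :: "(real \<times> real) set" where
  "torus_box = cbox (0, 0) (2 * pi, 2 * pi)"

definition S_T :: real where "S_T = 4 * pi^2"

text \<open>Lie algebra of SDiff(K): smooth, periodic, zero-mean, I-odd real functions.\<close>
definition lie_alg :: "fn set" where
  "lie_alg = {f. smooth_fn f
     \<and> (\<forall>x1 x2. f (x1 + 2 * pi, x2) = f (x1, x2) \<and> f (x1, x2 + 2 * pi) = f (x1, x2))
     \<and> integral torus_box f = 0
     \<and> (\<forall>x1 x2. f (2 * pi - x1, pi + x2) = - f (x1, x2))}"

definition pbracket :: "fn \<Rightarrow> fn \<Rightarrow> fn" where
  "pbracket f g = (\<lambda>x. pd2 f x * pd1 g x - pd1 f x * pd2 g x)"

definition ip :: "fn \<Rightarrow> fn \<Rightarrow> real" where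
  "ip f g = integral torus_box (\<lambda>x. pd1 f x * pd1 g x + pd2 f x * pd2 g x)"

definition Bop :: "fn \<Rightarrow> fn \<Rightarrow> fn" where
  "Bop u v = (THE b. b \<in> lie_alg \<and> (\<forall>w\<in>lie_alg. ip b w = ip u (pbracket v w)))"

definition conn :: "fn \<Rightarrow> fn \<Rightarrow> fn" where
  "conn u v = (\<lambda>x. (pbracket u v x - Bop u v x - Bop v u x) / 2)"

definition curv :: "fn \<Rightarrow> fn \<Rightarrow> fn \<Rightarrow> fn" where
  "curv u v w = (\<lambda>x. - conn u (conn v w) x + conn v (conn u w) x + conn (pbracket u v) w x)"

definition sec_curv :: "fn \<Rightarrow> fn \<Rightarrow> real" where
  "sec_curv u v = ip (curv u v u) v / (ip u u * ip v v - (ip u v)^2)"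

definition ee :: "int \<Rightarrow> int \<Rightarrow> real \<times> real \<Rightarrow> complex" where
  "ee k1 k2 x = cis (of_int k1 * fst x + of_int k2 * snd x)"

text \<open>xi_k = a e_k + conj a e_{-k} + (-1)^(k2+1) conj a e_{kbar} + (-1)^(k2+1) a e_{-kbar};
  this is real-valued, so we take its real part to obtain a real function.\<close>
definition xi :: "complex \<Rightarrow> nat \<Rightarrow> nat \<Rightarrow> fn" where
  "xi a k1 k2 = (\<lambda>x. Re (a * ee (int k1) (int k2) x + cnj a * ee (- int k1) (- int k2) x
      + (-1) ^ (k2 + 1) * cnj a * ee (int k1) (- int k2) x
      + (-1) ^ (k2 + 1) * a * ee (- int k1) (int k2) x))"

end

theory Submission
  imports Defs
begin

type_synonym md = "int \<times> int"
type_synonym tl = "(complex \<times> md) list"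

definition em :: "md \<Rightarrow> real \<times> real \<Rightarrow> complex" where
  "em m x = cis (of_int (fst m) * fst x + of_int (snd m) * snd x)"

definition ev :: "tl \<Rightarrow> real \<times> real \<Rightarrow> complex" where
  "ev L x = (\<Sum>p\<leftarrow>L. fst p * em (snd p) x)"

definition rf :: "tl \<Rightarrow> fn" where "rf L = (\<lambda>x. Re (ev L x))"

definition d1 :: "tl \<Rightarrow> tl" where "d1 L = map (\<lambda>p. (\<i> * of_int (fst (snd p)) * fst p, snd p)) L"
definition d2 :: "tl \<Rightarrow> tl" where "d2 L = map (\<lambda>p. (\<i> * of_int (snd (snd p)) * fst p, snd p)) L"

lemma ev_Nil[simp]: "ev [] x = 0" by (simp add: ev_def)
lemma ev_Cons[simp]: "ev (p # L) x = fst p * em (snd p) x + ev L x" by (simp add: ev_def)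
lemma ev_append[simp]: "ev (L @ M) x = ev L x + ev M x" by (simp add: ev_def)
lemma d1_Nil[simp]: "d1 [] = []" and d1_Cons[simp]: "d1 (p#L) = (\<i> * of_int (fst (snd p)) * fst p, snd p) # d1 L"
  by (simp_all add: d1_def)
lemma d2_Nil[simp]: "d2 [] = []" and d2_Cons[simp]: "d2 (p#L) = (\<i> * of_int (snd (snd p)) * fst p, snd p) # d2 L"
  by (simp_all add: d2_def)

lemma em_deriv:
  "(em m has_derivative (\<lambda>h. of_real (fst h) * (\<i> * of_int (fst m) * em m x) + of_real (snd h) * (\<i> * of_int (snd m) * em m x))) (at x)"
proof -
  have lin: "((\<lambda>x::real\<times>real. of_int (fst m) * fst x + of_int (snd m) * snd x) has_derivative
      (\<lambda>h. of_int (fst m) * fst h + of_int (snd m) * snd h)) (at x)"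
    by (auto intro!: derivative_eq_intros)
  from has_derivative_cis[OF lin] show ?thesis
    unfolding em_def
    by (rule has_derivative_eq_rhs) (auto simp: fun_eq_iff scaleR_conv_of_real algebra_simps)
qed

lemma ev_deriv:
  "(ev L has_derivative (\<lambda>h. of_real (fst h) * ev (d1 L) x + of_real (snd h) * ev (d2 L) x)) (at x)"
proof (induction L)
  case Nil
  then show ?case by (simp add: ev_def)
next
  case (Cons p L)
  have "((\<lambda>x. fst p * em (snd p) x + ev L x) has_derivative
     (\<lambda>h. fst p * (of_real (fst h) * (\<i> * of_int (fst (snd p)) * em (snd p) x) + of_real (snd h) * (\<i> * of_int (snd (snd p)) * em (snd p) x))
        + (of_real (fst h) * ev (d1 L) x + of_real (snd h) * ev (d2 L) x))) (at x)"
    by (intro has_derivative_add has_derivative_mult_right em_deriv Cons)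
  moreover have "ev (p # L) = (\<lambda>x. fst p * em (snd p) x + ev L x)" by (rule ext) simp
  ultimately show ?case
    by (auto elim!: has_derivative_eq_rhs simp: fun_eq_iff algebra_simps)
qed

lemma rf_deriv:
  "(rf L has_derivative (\<lambda>h. fst h * rf (d1 L) x + snd h * rf (d2 L) x)) (at x)"
proof -
  have "((\<lambda>x. Re (ev L x)) has_derivative (\<lambda>h. Re (of_real (fst h) * ev (d1 L) x + of_real (snd h) * ev (d2 L) x))) (at x)"
    by (rule bounded_linear.has_derivative[OF bounded_linear_Re ev_deriv])
  then show ?thesis unfolding rf_def by (rule has_derivative_eq_rhs) (auto simp: fun_eq_iff)
qed

lemma rf_differentiable[simp]: "rf L differentiable (at x)"
  using rf_deriv unfolding differentiable_def by blast

lemma pd1_rf[simp]: "pd1 (rf L) = rf (d1 L)"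
  unfolding pd1_def using frechet_derivative_at[OF rf_deriv, symmetric] by (auto simp: fun_eq_iff)
lemma pd2_rf[simp]: "pd2 (rf L) = rf (d2 L)"
  unfolding pd2_def using frechet_derivative_at[OF rf_deriv, symmetric] by (auto simp: fun_eq_iff)

lemma pd_True[simp]: "pd True f = pd2 f" and pd_False[simp]: "pd False f = pd1 f" by (simp_all add: pd_def)

lemma foldr_pd_rf: "\<exists>M. foldr pd ds (rf L) = rf M"
proof (induction ds)
  case Nil then show ?case by auto
next
  case (Cons d ds)
  then obtain M where "foldr pd ds (rf L) = rf M" by auto
  then have "foldr pd (d # ds) (rf L) = pd d (rf M)" by simp
  then show ?case by (cases d) auto
qed

lemma smooth_rf: "smooth_fn (rf L)"
  unfolding smooth_fn_def using foldr_pd_rf by (metis rf_differentiable)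

lemma cis_2pi_int: "cis (a + of_int n * (2 * pi)) = cis a"
proof -
  have "cos (of_int n * (2 * pi)) = 1" "sin (of_int n * (2 * pi)) = 0"
    using cos_int_2pin[of n] sin_int_2pin[of n] by (simp_all add: mult.commute)
  then show ?thesis by (simp add: cis.ctr cos_add sin_add complex_eq_iff)
qed

lemma em_per1: "em m (x1 + 2 * pi, x2) = em m (x1, x2)"
proof -
  have "of_int (fst m) * (x1 + 2 * pi) + of_int (snd m) * x2 = (of_int (fst m) * x1 + of_int (snd m) * x2) + of_int (fst m) * (2 * pi)"
    by (simp add: algebra_simps)
  then show ?thesis unfolding em_def by (simp only: fst_conv snd_conv cis_2pi_int)
qed

lemma em_per2: "em m (x1, x2 + 2 * pi) = em m (x1, x2)"
proof -
  have "of_int (fst m) * x1 + of_int (snd m) * (x2 + 2 * pi) = (of_int (fst m) * x1 + of_int (snd m) * x2) + of_int (snd m) * (2 * pi)"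
    by (simp add: algebra_simps)
  then show ?thesis unfolding em_def by (simp only: fst_conv snd_conv cis_2pi_int)
qed

lemma ev_per1: "ev L (x1 + 2 * pi, x2) = ev L (x1, x2)"
  by (induction L) (auto simp: em_per1)
lemma ev_per2: "ev L (x1, x2 + 2 * pi) = ev L (x1, x2)"
  by (induction L) (auto simp: em_per2)

lemma rf_per1: "rf L (x1 + 2 * pi, x2) = rf L (x1, x2)" by (simp add: rf_def ev_per1)
lemma rf_per2: "rf L (x1, x2 + 2 * pi) = rf L (x1, x2)" by (simp add: rf_def ev_per2)

lemma continuous_em: "continuous_on S (em m)"
  unfolding em_def by (intro continuous_intros)

lemma continuous_ev: "continuous_on S (ev L)"
  by (induction L) (auto simp: ev_def intro!: continuous_intros continuous_em)

lemma continuous_rf: "continuous_on S (rf L)"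
  unfolding rf_def by (intro continuous_intros continuous_ev)

lemma cis_integral_1d:
  "((\<lambda>t. cis (of_int n * t)) has_integral (if n = 0 then 2 * pi else 0)) {0..2*pi}"
proof (cases "n = 0")
  case True then show ?thesis
    using has_integral_const_real[of "1::complex" 0 "2*pi"] by (simp add: scaleR_conv_of_real)
next
  case False
  let ?F = "\<lambda>t. cis (of_int n * t) / (\<i> * of_int n)"
  have "((\<lambda>t. cis (of_int n * t)) has_integral (?F (2*pi) - ?F 0)) {0..2*pi}"
  proof (rule fundamental_theorem_of_calculus)
    fix t :: real
    have "((\<lambda>t. cis (of_int n * t)) has_derivative (\<lambda>h. (of_int n * h) *\<^sub>R (\<i> * cis (of_int n * t)))) (at t within {0..2*pi})"
      by (intro has_derivative_cis derivative_intros)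
    then have "((\<lambda>t. cis (of_int n * t)) has_vector_derivative (of_int n * (\<i> * cis (of_int n * t)))) (at t within {0..2*pi})"
      unfolding has_vector_derivative_def by (rule has_derivative_eq_rhs) (auto simp: fun_eq_iff scaleR_conv_of_real)
    then have "(?F has_vector_derivative (of_int n * (\<i> * cis (of_int n * t))) / (\<i> * of_int n)) (at t within {0..2*pi})"
      by (intro vector_derivative_works has_vector_derivative_divide) 
    then show "(?F has_vector_derivative cis (of_int n * t)) (at t within {0..2*pi})"
      using False by (simp add: field_simps)
  qed simp
  moreover have "?F (2*pi) - ?F 0 = 0"
    using cis_2pi_int[of 0 n] by (simp add: mult.commute)
  ultimately show ?thesis using False by simp
qed

lemma em_split: "em m (x, y) = cis (of_int (fst m) * x) * cis (of_int (snd m) * y)"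
  by (simp add: em_def cis_mult)

lemma torus_box_eq: "torus_box = cbox (0, 0) (2 * pi, 2 * pi)" by (simp add: torus_box_def)

lemma em_integral: "(em m has_integral (if m = (0,0) then of_real S_T else 0)) torus_box"
proof -
  have cont: "continuous_on (cbox (0, 0) (2 * pi, 2 * pi)) (em m)" by (rule continuous_em)
  have int1: "\<And>n. integral {0..2*pi} (\<lambda>t. cis (of_int n * t)) = (if n = 0 then 2 * pi else 0)"
    using cis_integral_1d by (rule integral_unique)
  have "integral (cbox (0, 0) (2 * pi, 2 * pi)) (em m)
      = integral (cbox 0 (2*pi)) (\<lambda>x. integral (cbox 0 (2*pi)) (\<lambda>y. em m (x, y)))"
    by (rule integral_prod_continuous[OF cont])
  also have "\<dots> = integral {0..2*pi} (\<lambda>x. cis (of_int (fst m) * x) * integral {0..2*pi} (\<lambda>y. cis (of_int (snd m) * y)))"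
    by (simp add: em_split)
  also have "\<dots> = integral {0..2*pi} (\<lambda>x. cis (of_int (fst m) * x)) * integral {0..2*pi} (\<lambda>y. cis (of_int (snd m) * y))"
    by (rule integral_mult_left)
  also have "\<dots> = (if m = (0,0) then of_real S_T else 0)"
    by (cases m) (auto simp: int1 S_T_def power2_eq_square)
  finally have eq: "integral torus_box (em m) = (if m = (0,0) then of_real S_T else 0)"
    unfolding torus_box_eq .
  have "(em m has_integral integral torus_box (em m)) torus_box"
    using integrable_continuous[OF cont] unfolding torus_box_eq by (rule integrable_integral)
  then show ?thesis unfolding eq .
qed

definition coef :: "tl \<Rightarrow> md \<Rightarrow> complex" where
  "coef L p = (\<Sum>q\<leftarrow>L. if snd q = p then fst q else 0)"

lemma coef_Nil[simp]: "coef [] p = 0" and coef_Cons[simp]: "coef (q # L) p = (if snd q = p then fst q else 0) + coef L p"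
  and coef_append[simp]: "coef (L @ M) p = coef L p + coef M p"
  by (simp_all add: coef_def)

lemma ev_integral: "(ev L has_integral (of_real S_T * coef L (0,0))) torus_box"
proof (induction L)
  case Nil
  then show ?case by (simp add: ev_def)
next
  case (Cons q L)
  have "((\<lambda>x. fst q * em (snd q) x + ev L x) has_integral
     (fst q * (if snd q = (0,0) then of_real S_T else 0) + of_real S_T * coef L (0,0))) torus_box"
    by (intro has_integral_add has_integral_mult_right em_integral Cons)
  moreover have "ev (q # L) = (\<lambda>x. fst q * em (snd q) x + ev L x)" by (rule ext) simp
  ultimately show ?case by (auto simp: algebra_simps)
qed

lemma rf_integral: "(rf L has_integral (S_T * Re (coef L (0,0)))) torus_box"
proof -
  have "((\<lambda>x. Re (ev L x)) has_integral Re (of_real S_T * coef L (0,0))) torus_box"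
    using has_integral_linear[OF ev_integral bounded_linear_Re] by (simp add: o_def)
  then show ?thesis by (simp add: rf_def)
qed

definition madd :: "md \<Rightarrow> md \<Rightarrow> md" where "madd m n = (fst m + fst n, snd m + snd n)"
definition mneg :: "md \<Rightarrow> md" where "mneg m = (- fst m, - snd m)"
definition mtil :: "md \<Rightarrow> md" where "mtil m = (- fst m, snd m)"
definition psig :: "md \<Rightarrow> complex" where "psig m = (if even (snd m) then 1 else -1)"

lemma madd_simps[simp]: "fst (madd m n) = fst m + fst n" "snd (madd m n) = snd m + snd n"
  by (simp_all add: madd_def)
lemma mneg_simps[simp]: "fst (mneg m) = - fst m" "snd (mneg m) = - snd m" by (simp_all add: mneg_def)
lemma mtil_simps[simp]: "fst (mtil m) = - fst m" "snd (mtil m) = snd m" by (simp_all add: mtil_def)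
lemma mneg_mneg[simp]: "mneg (mneg m) = m" by (simp add: mneg_def)
lemma mtil_mtil[simp]: "mtil (mtil m) = m" by (simp add: mtil_def)
lemma psig_mtil[simp]: "psig (mtil m) = psig m" by (simp add: psig_def)
lemma psig_madd: "psig (madd m n) = psig m * psig n" by (auto simp: psig_def)
lemma psig_sq[simp]: "psig m * psig m = 1" by (simp add: psig_def)

lemma em_madd: "em (madd m n) x = em m x * em n x"
  by (simp add: em_def cis_mult algebra_simps)
lemma cnj_cis': "cnj (cis t) = cis (-t)" by (simp add: complex_eq_iff)
lemma em_mneg: "em (mneg m) x = cnj (em m x)"
proof -
  have "- (of_int (fst m) * fst x + of_int (snd m) * snd x) = of_int (- fst m) * fst x + of_int (- snd m) * snd x" by simp
  then show ?thesis unfolding em_def cnj_cis' by simp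
qed
lemma em_I: "em m (2 * pi - x1, pi + x2) = psig m * em (mtil m) (x1, x2)"
proof -
  have "cis (of_int (fst m) * (2 * pi - x1) + of_int (snd m) * (pi + x2))
      = cis ((- of_int (fst m) * x1 + of_int (snd m) * x2) + of_int (fst m) * (2*pi)) * cis (of_int (snd m) * pi)"
    by (simp add: cis_mult algebra_simps)
  also have "\<dots> = cis (- of_int (fst m) * x1 + of_int (snd m) * x2) * psig m"
  proof -
    have "cis (of_int (snd m) * pi) = psig m"
    proof -
      obtain j where j: "snd m = 2 * j \<or> snd m = 2 * j + 1" by (metis oddE evenE)
      then show ?thesis
      proof
        assume h: "snd m = 2 * j"
        have "cis (of_int (snd m) * pi) = cis (0 + of_int j * (2*pi))" using h by (simp add: algebra_simps)
        then show ?thesis using h by (simp only: cis_2pi_int) (simp add: psig_def)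
      next
        assume h: "snd m = 2 * j + 1"
        have "cis (of_int (snd m) * pi) = cis (pi + of_int j * (2*pi))" using h by (simp add: algebra_simps)
        then show ?thesis using h by (simp only: cis_2pi_int) (simp add: psig_def complex_eq_iff)
      qed
    qed
    then show ?thesis by (simp only: cis_2pi_int)
  qed
  finally show ?thesis by (simp add: em_def)
qed

lemma sumlist_coef:
  assumes "finite T" "snd ` set V \<subseteq> T"
  shows "(\<Sum>q\<leftarrow>V. fst q * g (snd q)) = (\<Sum>n\<in>T. coef V n * g n)"
  using assms(2)
proof (induction V)
  case Nil then show ?case by simp
next
  case (Cons q V)
  have "(\<Sum>n\<in>T. (if snd q = n then fst q else 0) * g n) = (\<Sum>n\<in>T. if snd q = n then fst q * g (snd q) else 0)"
    by (rule sum.cong) auto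
  also have "\<dots> = fst q * g (snd q)" using Cons.prems assms(1) by (simp add: sum.delta)
  finally have "(\<Sum>n\<in>T. (if snd q = n then fst q else 0) * g n) = fst q * g (snd q)" .
  then show ?case using Cons by (simp add: algebra_simps sum.distrib)
qed

lemma ev_coef:
  assumes "finite T" "snd ` set L \<subseteq> T"
  shows "ev L x = (\<Sum>n\<in>T. coef L n * em n x)"
  unfolding ev_def using sumlist_coef[OF assms, of "\<lambda>n. em n x"] by simp

definition shiftL :: "md \<Rightarrow> tl \<Rightarrow> tl" where "shiftL p L = map (\<lambda>q. (fst q, madd (snd q) p)) L"

lemma ev_shiftL: "ev (shiftL p L) x = ev L x * em p x"
  by (induction L) (auto simp: shiftL_def em_madd algebra_simps)

lemma coef_shiftL: "coef (shiftL (mneg p) L) (0,0) = coef L p"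
proof (induction L)
  case (Cons q L)
  have "(madd (snd q) (mneg p) = (0,0)) = (snd q = p)"
    by (cases "snd q"; cases p) (auto simp: madd_def mneg_def)
  then show ?case using Cons by (simp add: shiftL_def)
qed (simp add: shiftL_def)

lemma coef_integral: "((\<lambda>x. ev L x * em (mneg p) x) has_integral (of_real S_T * coef L p)) torus_box"
proof -
  have "ev (shiftL (mneg p) L) = (\<lambda>x. ev L x * em (mneg p) x)" by (rule ext) (rule ev_shiftL)
  then show ?thesis using ev_integral[of "shiftL (mneg p) L"] by (simp add: coef_shiftL)
qed

lemma coef_unique:
  assumes "\<And>x. ev L x = ev M x"
  shows "coef L = coef M"
proof
  fix p
  have "(\<lambda>x. ev L x * em (mneg p) x) = (\<lambda>x. ev M x * em (mneg p) x)" using assms by simp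
  then have "of_real S_T * coef L p = of_real S_T * coef M p"
    using coef_integral[of L p] coef_integral[of M p]
    by (metis has_integral_unique)
  moreover have "S_T \<noteq> 0" by (simp add: S_T_def)
  ultimately show "coef L p = coef M p" by simp
qed

definition comb :: "(md \<Rightarrow> md \<Rightarrow> real) \<Rightarrow> tl \<Rightarrow> tl \<Rightarrow> tl" where
  "comb \<phi> U V = concat (map (\<lambda>p. map (\<lambda>q. (fst p * fst q * of_real (\<phi> (snd p) (snd q)), madd (snd p) (snd q))) V) U)"

lemma ev_concat: "ev (concat Ls) x = (\<Sum>L\<leftarrow>Ls. ev L x)" by (induction Ls) auto

lemma ev_comb_list:
  "ev (comb \<phi> U V) x = (\<Sum>p\<leftarrow>U. \<Sum>q\<leftarrow>V. fst p * fst q * of_real (\<phi> (snd p) (snd q)) * em (madd (snd p) (snd q)) x)"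
  unfolding comb_def ev_concat by (simp add: o_def ev_def)

lemma ev_comb_coef:
  assumes "finite S" "snd ` set U \<subseteq> S" "finite T" "snd ` set V \<subseteq> T"
  shows "ev (comb \<phi> U V) x = (\<Sum>m\<in>S. \<Sum>n\<in>T. coef U m * coef V n * of_real (\<phi> m n) * em (madd m n) x)"
proof -
  have "ev (comb \<phi> U V) x = (\<Sum>p\<leftarrow>U. fst p * (\<Sum>q\<leftarrow>V. fst q * (of_real (\<phi> (snd p) (snd q)) * em (madd (snd p) (snd q)) x)))"
    unfolding ev_comb_list by (simp add: sum_list_const_mult algebra_simps)
  also have "\<dots> = (\<Sum>p\<leftarrow>U. fst p * (\<Sum>n\<in>T. coef V n * (of_real (\<phi> (snd p) n) * em (madd (snd p) n) x)))"
  proof (rule arg_cong[where f=sum_list], rule map_cong[OF refl])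
    fix p show "fst p * (\<Sum>q\<leftarrow>V. fst q * (of_real (\<phi> (snd p) (snd q)) * em (madd (snd p) (snd q)) x))
       = fst p * (\<Sum>n\<in>T. coef V n * (of_real (\<phi> (snd p) n) * em (madd (snd p) n) x))"
      using sumlist_coef[OF assms(3,4), of "\<lambda>n. of_real (\<phi> (snd p) n) * em (madd (snd p) n) x"] by simp
  qed
  also have "\<dots> = (\<Sum>m\<in>S. coef U m * (\<Sum>n\<in>T. coef V n * (of_real (\<phi> m n) * em (madd m n) x)))"
    using sumlist_coef[OF assms(1,2), of "\<lambda>m. \<Sum>n\<in>T. coef V n * (of_real (\<phi> m n) * em (madd m n) x)"] by simp
  finally show ?thesis by (simp add: sum_distrib_left algebra_simps)
qed

definition msym :: "tl \<Rightarrow> md set" where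
  "msym L = (let M = snd ` set L in M \<union> mneg ` M \<union> mtil ` M \<union> (mneg \<circ> mtil) ` M)"

lemma msym_finite[simp]: "finite (msym L)" by (simp add: msym_def Let_def)
lemma msym_sub: "snd ` set L \<subseteq> msym L" by (auto simp: msym_def)
lemma mtil_mneg[simp]: "mtil (mneg m) = mneg (mtil m)" by (simp add: mneg_def mtil_def)
lemma msym_iff: "m \<in> msym L \<longleftrightarrow> (\<exists>q\<in>set L. m = snd q \<or> m = mneg (snd q) \<or> m = mtil (snd q) \<or> m = mneg (mtil (snd q)))"
  unfolding msym_def Let_def by (simp add: image_iff) blast
lemma msym_mneg: assumes "m \<in> msym L" shows "mneg m \<in> msym L"
proof -
  from assms obtain q where q: "q \<in> set L" "m = snd q \<or> m = mneg (snd q) \<or> m = mtil (snd q) \<or> m = mneg (mtil (snd q))"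
    unfolding msym_iff by blast
  show ?thesis unfolding msym_iff by (rule bexI[OF _ q(1)]) (use q(2) in auto)
qed
lemma msym_mtil: assumes "m \<in> msym L" shows "mtil m \<in> msym L"
proof -
  from assms obtain q where q: "q \<in> set L" "m = snd q \<or> m = mneg (snd q) \<or> m = mtil (snd q) \<or> m = mneg (mtil (snd q))"
    unfolding msym_iff by blast
  show ?thesis unfolding msym_iff by (rule bexI[OF _ q(1)]) (use q(2) in auto)
qed

lemma bij_mneg: "bij_betw mneg (msym L) (msym L)"
  by (rule bij_betw_byWitness[where f'=mneg]) (auto intro: msym_mneg)
lemma bij_mtil: "bij_betw mtil (msym L) (msym L)"
  by (rule bij_betw_byWitness[where f'=mtil]) (auto intro: msym_mtil)

lemma sum_mneg: "(\<Sum>m\<in>msym L. f (mneg m)) = (\<Sum>m\<in>msym L. f m)"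
  using sum.reindex_bij_betw[OF bij_mneg, of f] by simp
lemma sum_mtil: "(\<Sum>m\<in>msym L. f (mtil m)) = (\<Sum>m\<in>msym L. f m)"
  using sum.reindex_bij_betw[OF bij_mtil, of f] by simp

definition realL :: "tl \<Rightarrow> bool" where "realL U \<longleftrightarrow> (\<forall>x. Im (ev U x) = 0)"
definition oddL :: "tl \<Rightarrow> bool" where
  "oddL U \<longleftrightarrow> (\<forall>x1 x2. ev U (2 * pi - x1, pi + x2) = - ev U (x1, x2))"

definition cnjL :: "tl \<Rightarrow> tl" where "cnjL U = map (\<lambda>q. (cnj (fst q), mneg (snd q))) U"
definition IL :: "tl \<Rightarrow> tl" where "IL U = map (\<lambda>q. (psig (snd q) * fst q, mtil (snd q))) U"
definition negL :: "tl \<Rightarrow> tl" where "negL U = map (\<lambda>q. (- fst q, snd q)) U"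

lemma ev_cnjL: "ev (cnjL U) x = cnj (ev U x)"
  by (induction U) (auto simp: cnjL_def em_mneg)
lemma ev_IL: "ev (IL U) (x1, x2) = ev U (2 * pi - x1, pi + x2)"
  by (induction U) (auto simp: IL_def em_I)
lemma ev_negL: "ev (negL U) x = - ev U x"
  by (induction U) (auto simp: negL_def)

lemma mneg_eq_iff: "(mneg a = b) = (a = mneg b)" by (auto simp: mneg_def)
lemma mtil_eq_iff: "(mtil a = b) = (a = mtil b)" by (auto simp: mtil_def)

lemma coef_cnjL: "coef (cnjL U) m = cnj (coef U (mneg m))"
  by (induction U) (auto simp: cnjL_def mneg_eq_iff)
lemma coef_IL: "coef (IL U) m = psig m * coef U (mtil m)"
  by (induction U) (auto simp: IL_def mtil_eq_iff algebra_simps)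
lemma coef_negL: "coef (negL U) m = - coef U m"
  by (induction U) (auto simp: negL_def)

lemma realL_coef:
  assumes "realL U" shows "coef U (mneg m) = cnj (coef U m)"
proof -
  have h: "Im (ev U x) = 0" for x using assms unfolding realL_def by blast
  have "\<And>x. ev (cnjL U) x = ev U x"
    using h by (simp add: ev_cnjL complex_eq_iff)
  then have "coef (cnjL U) = coef U" by (rule coef_unique)
  then have "cnj (coef U (mneg m)) = coef U m" by (metis coef_cnjL)
  then show ?thesis by (metis complex_cnj_cnj)
qed

lemma oddL_coef:
  assumes "oddL U" shows "psig m * coef U (mtil m) = - coef U m"
proof -
  have "\<And>x. ev (IL U) x = ev (negL U) x"
    using assms by (auto simp: ev_IL ev_negL oddL_def)
  then have "coef (IL U) = coef (negL U)" by (rule coef_unique)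
  then show ?thesis by (metis coef_IL coef_negL)
qed

lemma sum2_mneg: "(\<Sum>m\<in>msym U. \<Sum>n\<in>msym V. f (mneg m) (mneg n)) = (\<Sum>m\<in>msym U. \<Sum>n\<in>msym V. f m n)"
proof -
  have "(\<Sum>m\<in>msym U. \<Sum>n\<in>msym V. f (mneg m) (mneg n)) = (\<Sum>m\<in>msym U. \<Sum>n\<in>msym V. f (mneg m) n)"
    by (rule sum.cong[OF refl]) (rule sum_mneg)
  also have "\<dots> = (\<Sum>m\<in>msym U. \<Sum>n\<in>msym V. f m n)" by (rule sum_mneg[where f="\<lambda>m. \<Sum>n\<in>msym V. f m n"])
  finally show ?thesis .
qed

lemma sum2_mtil: "(\<Sum>m\<in>msym U. \<Sum>n\<in>msym V. f (mtil m) (mtil n)) = (\<Sum>m\<in>msym U. \<Sum>n\<in>msym V. f m n)"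
proof -
  have "(\<Sum>m\<in>msym U. \<Sum>n\<in>msym V. f (mtil m) (mtil n)) = (\<Sum>m\<in>msym U. \<Sum>n\<in>msym V. f (mtil m) n)"
    by (rule sum.cong[OF refl]) (rule sum_mtil)
  also have "\<dots> = (\<Sum>m\<in>msym U. \<Sum>n\<in>msym V. f m n)" by (rule sum_mtil[where f="\<lambda>m. \<Sum>n\<in>msym V. f m n"])
  finally show ?thesis .
qed

lemma ev_comb_sym: "ev (comb \<phi> U V) x = (\<Sum>m\<in>msym U. \<Sum>n\<in>msym V. coef U m * coef V n * of_real (\<phi> m n) * em (madd m n) x)"
  by (rule ev_comb_coef) (simp_all add: msym_sub)

lemma madd_mneg: "madd (mneg m) (mneg n) = mneg (madd m n)" by (simp add: madd_def mneg_def)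
lemma madd_mtil: "madd (mtil m) (mtil n) = mtil (madd m n)" by (simp add: madd_def mtil_def)

lemma comb_real:
  assumes U: "realL U" and V: "realL V" and phi: "\<And>m n. \<phi> (mneg m) (mneg n) = \<phi> m n"
  shows "realL (comb \<phi> U V)"
  unfolding realL_def
proof
  fix x
  have "cnj (ev (comb \<phi> U V) x) = (\<Sum>m\<in>msym U. \<Sum>n\<in>msym V. coef U (mneg m) * coef V (mneg n) * of_real (\<phi> (mneg m) (mneg n)) * em (madd (mneg m) (mneg n)) x)"
    unfolding ev_comb_sym by (simp add: realL_coef[OF U] realL_coef[OF V] phi madd_mneg em_mneg)
  also have "\<dots> = ev (comb \<phi> U V) x"
    unfolding ev_comb_sym by (rule sum2_mneg[where f="\<lambda>m n. coef U m * coef V n * of_real (\<phi> m n) * em (madd m n) x"])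
  finally have "Im (cnj (ev (comb \<phi> U V) x)) = Im (ev (comb \<phi> U V) x)" by simp
  then show "Im (ev (comb \<phi> U V) x) = 0" by simp
qed

lemma psig_mtil_coef: "oddL U \<Longrightarrow> coef U (mtil m) * psig m = - coef U m"
  using oddL_coef by (simp add: mult.commute)

lemma comb_odd:
  assumes U: "oddL U" and V: "oddL V" and phi: "\<And>m n. \<phi> (mtil m) (mtil n) = - \<phi> m n"
  shows "oddL (comb \<phi> U V)"
  unfolding oddL_def
proof (intro allI)
  fix x1 x2
  have "ev (comb \<phi> U V) (2 * pi - x1, pi + x2) = (\<Sum>m\<in>msym U. \<Sum>n\<in>msym V. coef U m * coef V n * of_real (\<phi> m n) * (psig m * psig n) * em (mtil (madd m n)) (x1, x2))"
    unfolding ev_comb_sym em_I by (simp add: psig_madd madd_mtil algebra_simps)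
  also have "\<dots> = (\<Sum>m\<in>msym U. \<Sum>n\<in>msym V. coef U (mtil m) * coef V (mtil n) * of_real (\<phi> (mtil m) (mtil n)) * (psig (mtil m) * psig (mtil n)) * em (mtil (madd (mtil m) (mtil n))) (x1, x2))"
    by (rule sum2_mtil[symmetric, where f="\<lambda>m n. coef U m * coef V n * of_real (\<phi> m n) * (psig m * psig n) * em (mtil (madd m n)) (x1, x2)"])
  also have "\<dots> = (\<Sum>m\<in>msym U. \<Sum>n\<in>msym V. (coef U (mtil m) * psig m) * (coef V (mtil n) * psig n) * of_real (\<phi> (mtil m) (mtil n)) * em (madd m n) (x1, x2))"
    by (simp add: madd_mtil algebra_simps)
  also have "\<dots> = - ev (comb \<phi> U V) (x1, x2)"
    unfolding ev_comb_sym psig_mtil_coef[OF U] psig_mtil_coef[OF V] phi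
    by (simp add: sum_negf[symmetric])
  finally show "ev (comb \<phi> U V) (2 * pi - x1, pi + x2) = - ev (comb \<phi> U V) (x1, x2)" .
qed

lemma realL_D: "realL U \<Longrightarrow> Im (ev U x) = 0" unfolding realL_def by blast

lemma realL_d12:
  assumes "realL U" shows "realL (d1 U)" "realL (d2 U)"
proof -
  have "\<forall>x. Im (ev (d1 U) x) = 0 \<and> Im (ev (d2 U) x) = 0"
  proof
    fix x
    have A: "((\<lambda>x. Im (ev U x)) has_derivative (\<lambda>h. Im (of_real (fst h) * ev (d1 U) x + of_real (snd h) * ev (d2 U) x))) (at x)"
      by (rule bounded_linear.has_derivative[OF bounded_linear_Im ev_deriv])
    have "(\<lambda>x. Im (ev U x)) = (\<lambda>x. 0)" by (rule ext) (rule realL_D[OF assms])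
    then have B: "((\<lambda>x. Im (ev U x)) has_derivative (\<lambda>h. 0)) (at x)" by simp
    have "(\<lambda>h. Im (of_real (fst h) * ev (d1 U) x + of_real (snd h) * ev (d2 U) x)) = (\<lambda>h. 0)"
      by (rule has_derivative_unique[OF A B])
    from fun_cong[OF this, of "(1,0)"] fun_cong[OF this, of "(0,1)"]
    show "Im (ev (d1 U) x) = 0 \<and> Im (ev (d2 U) x) = 0" by simp
  qed
  then show "realL (d1 U)" "realL (d2 U)" by (auto simp: realL_def)
qed

lemma rf_mult: "realL U \<Longrightarrow> realL V \<Longrightarrow> rf U x * rf V x = Re (ev U x * ev V x)"
  using realL_D[of U x] realL_D[of V x] by (simp add: rf_def)

lemma prod_sums: "(\<Sum>p\<leftarrow>U. f p) * (\<Sum>q\<leftarrow>V. g q) = (\<Sum>p\<leftarrow>U. \<Sum>q\<leftarrow>V. (f p * g q :: complex))"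
  by (induction U) (auto simp: algebra_simps sum_list_const_mult)

lemma ev_d1: "ev (d1 U) x = (\<Sum>p\<leftarrow>U. \<i> * of_int (fst (snd p)) * fst p * em (snd p) x)"
  by (induction U) auto
lemma ev_d2: "ev (d2 U) x = (\<Sum>p\<leftarrow>U. \<i> * of_int (snd (snd p)) * fst p * em (snd p) x)"
  by (induction U) auto

definition cr :: "md \<Rightarrow> md \<Rightarrow> real" where "cr m n = of_int (fst m * snd n - snd m * fst n)"
definition dotn :: "md \<Rightarrow> md \<Rightarrow> real" where "dotn m n = - of_int (fst m * fst n + snd m * snd n)"

lemma ev_comb_cr: "ev (comb cr U V) x = ev (d2 U) x * ev (d1 V) x - ev (d1 U) x * ev (d2 V) x"
  unfolding ev_comb_list ev_d1 ev_d2 prod_sums sum_list_subtractf[symmetric]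
  by (rule arg_cong[where f=sum_list], rule map_cong[OF refl])+
     (simp add: cr_def em_madd algebra_simps)

lemma ev_comb_dotn: "ev (comb dotn U V) x = ev (d1 U) x * ev (d1 V) x + ev (d2 U) x * ev (d2 V) x"
  unfolding ev_comb_list ev_d1 ev_d2 prod_sums sum_list_addf[symmetric]
  by (rule arg_cong[where f=sum_list], rule map_cong[OF refl])+
     (simp add: dotn_def em_madd algebra_simps)

lemma pbracket_rf:
  assumes "realL U" "realL V"
  shows "pbracket (rf U) (rf V) = rf (comb cr U V)"
proof
  fix x
  note r = realL_d12[OF assms(1)] realL_d12[OF assms(2)]
  show "pbracket (rf U) (rf V) x = rf (comb cr U V) x"
    unfolding pbracket_def pd1_rf pd2_rf rf_mult[OF r(2) r(3)] rf_mult[OF r(1) r(4)]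
    by (simp add: rf_def ev_comb_cr)
qed

lemma ip_rf:
  assumes "realL U" "realL V"
  shows "ip (rf U) (rf V) = S_T * Re (coef (comb dotn U V) (0,0))"
proof -
  note r = realL_d12[OF assms(1)] realL_d12[OF assms(2)]
  have "(\<lambda>x. pd1 (rf U) x * pd1 (rf V) x + pd2 (rf U) x * pd2 (rf V) x) = rf (comb dotn U V)"
    unfolding pd1_rf pd2_rf
    by (rule ext) (use realL_D[OF r(1)] realL_D[OF r(2)] realL_D[OF r(3)] realL_D[OF r(4)] in \<open>simp add: rf_def ev_comb_dotn\<close>)
  then show ?thesis unfolding ip_def using rf_integral integral_unique by metis
qed

lemma coef_concat: "coef (concat Ls) p = (\<Sum>L\<leftarrow>Ls. coef L p)" by (induction Ls) auto

lemma coef_comb: "coef (comb \<phi> U V) p = (\<Sum>a\<leftarrow>U. \<Sum>b\<leftarrow>V. if madd (snd a) (snd b) = p then fst a * fst b * of_real (\<phi> (snd a) (snd b)) else 0)"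
  unfolding comb_def coef_concat by (simp add: o_def coef_def cong: if_cong)

lemma coef_comb0:
  assumes "\<And>m n. madd m n = (0,0) \<Longrightarrow> \<phi> m n = 0"
  shows "coef (comb \<phi> U V) (0,0) = 0"
  unfolding coef_comb using assms by (simp cong: if_cong)

lemma lie_rf:
  assumes "realL U" "oddL U" "Re (coef U (0,0)) = 0"
  shows "rf U \<in> lie_alg"
  unfolding lie_alg_def
proof (intro CollectI conjI allI)
  show "smooth_fn (rf U)" by (rule smooth_rf)
  fix x1 x2
  show "rf U (x1 + 2 * pi, x2) = rf U (x1, x2)" by (rule rf_per1)
  show "rf U (x1, x2 + 2 * pi) = rf U (x1, x2)" by (rule rf_per2)
  show "rf U (2 * pi - x1, pi + x2) = - rf U (x1, x2)" using assms(2) by (simp add: rf_def oddL_def)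
next
  show "integral torus_box (rf U) = 0" using rf_integral[of U] assms(3) integral_unique by force
qed

definition HD :: "fn \<Rightarrow> fn \<Rightarrow> fn \<Rightarrow> bool" where
  "HD f f1 f2 \<longleftrightarrow> (\<forall>x. (f has_derivative (\<lambda>h. fst h * f1 x + snd h * f2 x)) (at x))"

lemma HD_D: "HD f f1 f2 \<Longrightarrow> (f has_derivative (\<lambda>h. fst h * f1 x + snd h * f2 x)) (at x)"
  unfolding HD_def by blast

lemma HD_pd: assumes "HD f f1 f2" shows "pd1 f = f1" "pd2 f = f2"
proof -
  have eq: "\<And>x. frechet_derivative f (at x) = (\<lambda>h. fst h * f1 x + snd h * f2 x)"
    by (rule frechet_derivative_at[OF HD_D[OF assms], symmetric])
  show "pd1 f = f1" unfolding pd1_def eq by simp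
  show "pd2 f = f2" unfolding pd2_def eq by simp
qed

lemma deriv_decomp:
  assumes "f differentiable (at x)"
  shows "(f has_derivative (\<lambda>h. fst h * pd1 f x + snd h * pd2 f x)) (at x)"
proof -
  let ?D = "frechet_derivative f (at x)"
  have fd: "(f has_derivative ?D) (at x)" using assms by (rule frechet_derivative_works[THEN iffD1])
  then have lin: "linear ?D" using has_derivative_linear by blast
  have "?D h = fst h * ?D (1,0) + snd h * ?D (0,1)" for h
  proof -
    have "h = fst h *\<^sub>R (1,0) + snd h *\<^sub>R (0,1)" by (cases h) simp
    then have "?D h = ?D (fst h *\<^sub>R (1,0) + snd h *\<^sub>R (0,1))" by (rule arg_cong)
    also have "\<dots> = fst h * ?D (1,0) + snd h * ?D (0,1)"
      by (simp only: linear_add[OF lin] linear_scale[OF lin] real_scaleR_def)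
    finally show ?thesis .
  qed
  then have eqD: "?D = (\<lambda>h. fst h * ?D (1,0) + snd h * ?D (0,1))" by (rule ext)
  show ?thesis
  proof (rule has_derivative_eq_rhs[OF fd])
    show "?D = (\<lambda>h. fst h * pd1 f x + snd h * pd2 f x)" unfolding pd1_def pd2_def by (rule eqD)
  qed
qed

lemma HD_diffble: "(\<And>x. f differentiable (at x)) \<Longrightarrow> HD f (pd1 f) (pd2 f)"
  unfolding HD_def using deriv_decomp by blast

lemma HD_rf: "HD (rf L) (rf (d1 L)) (rf (d2 L))"
  unfolding HD_def using rf_deriv by blast

lemma HD_mult: assumes "HD f f1 f2" "HD g g1 g2"
  shows "HD (\<lambda>x. f x * g x) (\<lambda>x. f1 x * g x + f x * g1 x) (\<lambda>x. f2 x * g x + f x * g2 x)"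
  unfolding HD_def
proof
  fix x
  show "((\<lambda>x. f x * g x) has_derivative (\<lambda>h. fst h * (f1 x * g x + f x * g1 x) + snd h * (f2 x * g x + f x * g2 x))) (at x)"
    using has_derivative_mult[OF HD_D[OF assms(1)] HD_D[OF assms(2)]]
    by (rule has_derivative_eq_rhs) (simp add: fun_eq_iff algebra_simps)
qed

lemma HD_add: assumes "HD f f1 f2" "HD g g1 g2"
  shows "HD (\<lambda>x. f x + g x) (\<lambda>x. f1 x + g1 x) (\<lambda>x. f2 x + g2 x)"
  unfolding HD_def
proof
  fix x
  show "((\<lambda>x. f x + g x) has_derivative (\<lambda>h. fst h * (f1 x + g1 x) + snd h * (f2 x + g2 x))) (at x)"
    using has_derivative_add[OF HD_D[OF assms(1)] HD_D[OF assms(2)]]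
    by (rule has_derivative_eq_rhs) (simp add: fun_eq_iff algebra_simps)
qed

lemma HD_diff: assumes "HD f f1 f2" "HD g g1 g2"
  shows "HD (\<lambda>x. f x - g x) (\<lambda>x. f1 x - g1 x) (\<lambda>x. f2 x - g2 x)"
  unfolding HD_def
proof
  fix x
  show "((\<lambda>x. f x - g x) has_derivative (\<lambda>h. fst h * (f1 x - g1 x) + snd h * (f2 x - g2 x))) (at x)"
    using has_derivative_diff[OF HD_D[OF assms(1)] HD_D[OF assms(2)]]
    by (rule has_derivative_eq_rhs) (simp add: fun_eq_iff algebra_simps)
qed

lemma HD_cont: assumes "HD f f1 f2" shows "continuous_on S f"
  by (rule continuous_at_imp_continuous_on) (use has_derivative_continuous[OF HD_D[OF assms]] in blast)

lemma div1:
  assumes hd: "HD P P1 P2" and c: "continuous_on UNIV P1"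
    and per: "\<And>x1 x2. P (x1 + 2 * pi, x2) = P (x1, x2)"
  shows "integral torus_box P1 = 0"
proof -
  have c': "continuous_on (cbox (0, 0) (2 * pi, 2 * pi)) (\<lambda>(x, y). P1 (x, y))"
  proof -
    have "(\<lambda>(x, y). P1 (x, y)) = P1" by auto
    then show ?thesis using continuous_on_subset[OF c subset_UNIV] by simp
  qed
  have inner: "integral {0..2*pi} (\<lambda>x. P1 (x, y)) = 0" for y
  proof -
    have "((\<lambda>x. P1 (x, y)) has_integral (P (2*pi, y) - P (0, y))) {0..2*pi}"
    proof (rule fundamental_theorem_of_calculus)
      fix t :: real
      have "((\<lambda>t. (t, y)) has_derivative (\<lambda>h. (h, 0))) (at t)"
        by (auto intro!: derivative_eq_intros)
      from has_derivative_compose[OF this HD_D[OF hd]]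
      have "((\<lambda>t. P (t, y)) has_derivative (\<lambda>h. h * P1 (t, y))) (at t)"
        by (auto elim!: has_derivative_eq_rhs)
      then show "((\<lambda>t. P (t, y)) has_vector_derivative P1 (t, y)) (at t within {0..2 * pi})"
        unfolding has_vector_derivative_def by (auto intro: has_derivative_at_withinI simp: mult.commute)
    qed simp
    moreover have "P (2*pi, y) - P (0, y) = 0" using per[of 0 y] by simp
    ultimately have "((\<lambda>x. P1 (x, y)) has_integral 0) {0..2*pi}" by simp
    then show ?thesis by (rule integral_unique)
  qed
  have "integral torus_box P1 = integral (cbox 0 (2*pi)) (\<lambda>x. integral (cbox 0 (2*pi)) (\<lambda>y. P1 (x, y)))"
    unfolding torus_box_eq using integral_prod_continuous[OF c'] by simp
  also have "\<dots> = integral (cbox 0 (2*pi)) (\<lambda>y. integral (cbox 0 (2*pi)) (\<lambda>x. P1 (x, y)))"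
    by (rule integral_swap_continuous) (use c' in simp)
  also have "\<dots> = 0" by (simp only: cbox_interval inner integral_0)
  finally show ?thesis .
qed

lemma div2:
  assumes hd: "HD P P1 P2" and c: "continuous_on UNIV P2"
    and per: "\<And>x1 x2. P (x1, x2 + 2 * pi) = P (x1, x2)"
  shows "integral torus_box P2 = 0"
proof -
  have c': "continuous_on (cbox (0, 0) (2 * pi, 2 * pi)) P2"
    using continuous_on_subset[OF c subset_UNIV] .
  have inner: "integral {0..2*pi} (\<lambda>y. P2 (x, y)) = 0" for x
  proof -
    have "((\<lambda>y. P2 (x, y)) has_integral (P (x, 2*pi) - P (x, 0))) {0..2*pi}"
    proof (rule fundamental_theorem_of_calculus)
      fix t :: real
      have "((\<lambda>t. (x, t)) has_derivative (\<lambda>h. (0, h))) (at t)"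
        by (auto intro!: derivative_eq_intros)
      from has_derivative_compose[OF this HD_D[OF hd]]
      have "((\<lambda>t. P (x, t)) has_derivative (\<lambda>h. h * P2 (x, t))) (at t)"
        by (auto elim!: has_derivative_eq_rhs)
      then show "((\<lambda>t. P (x, t)) has_vector_derivative P2 (x, t)) (at t within {0..2 * pi})"
        unfolding has_vector_derivative_def by (auto intro: has_derivative_at_withinI simp: mult.commute)
    qed simp
    moreover have "P (x, 2*pi) - P (x, 0) = 0" using per[of x 0] by simp
    ultimately have "((\<lambda>y. P2 (x, y)) has_integral 0) {0..2*pi}" by simp
    then show ?thesis by (rule integral_unique)
  qed
  have "integral torus_box P2 = integral (cbox 0 (2*pi)) (\<lambda>x. integral (cbox 0 (2*pi)) (\<lambda>y. P2 (x, y)))"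
    unfolding torus_box_eq using integral_prod_continuous[OF c'] by simp
  also have "\<dots> = 0" by (simp only: cbox_interval inner integral_0)
  finally show ?thesis .
qed

lemma per_pd:
  assumes d: "\<And>x. f differentiable (at x)" and per: "\<And>x. f (x + t) = f x"
  shows "pd1 f (x + t) = pd1 f x" "pd2 f (x + t) = pd2 f x"
proof -
  have "((\<lambda>x. x + t) has_derivative (\<lambda>h. h)) (at x)" by (auto intro!: derivative_eq_intros)
  from has_derivative_compose[OF this deriv_decomp[OF d[of "x + t"]]]
  have "((\<lambda>x. f (x + t)) has_derivative (\<lambda>h. fst h * pd1 f (x + t) + snd h * pd2 f (x + t))) (at x)" by simp
  moreover have "(\<lambda>x. f (x + t)) = f" using per by auto
  ultimately have "(f has_derivative (\<lambda>h. fst h * pd1 f (x + t) + snd h * pd2 f (x + t))) (at x)" by simp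
  from has_derivative_unique[OF this deriv_decomp[OF d[of x]]]
  have eq: "(\<lambda>h. fst h * pd1 f (x + t) + snd h * pd2 f (x + t)) = (\<lambda>h. fst h * pd1 f x + snd h * pd2 f x)" .
  from fun_cong[OF eq, of "(1,0)"] show "pd1 f (x + t) = pd1 f x" by simp
  from fun_cong[OF eq, of "(0,1)"] show "pd2 f (x + t) = pd2 f x" by simp
qed

definition nrm :: "md \<Rightarrow> real" where "nrm m = of_int (fst m * fst m + snd m * snd m)"
definition gam :: "md \<Rightarrow> md \<Rightarrow> real" where "gam m n = cr m n * nrm m / nrm (madd m n)"
definition lapL :: "tl \<Rightarrow> tl" where "lapL U = d1 (d1 U) @ d2 (d2 U)"
definition lapc :: "tl \<Rightarrow> tl" where "lapc L = map (\<lambda>q. (- of_real (nrm (snd q)) * fst q, snd q)) L"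

lemma nrm_zero_iff: "nrm m = 0 \<longleftrightarrow> m = (0,0)"
proof -
  have "fst m * fst m + snd m * snd m = 0 \<longleftrightarrow> fst m = 0 \<and> snd m = 0"
    by (rule sum_squares_eq_zero_iff)
  then show ?thesis by (cases m) (simp add: nrm_def)
qed

lemma ev_lap: "ev (d1 (d1 L)) x + ev (d2 (d2 L)) x = ev (lapc L) x"
  by (induction L) (auto simp: lapc_def nrm_def algebra_simps)

lemma lapc_comb: "lapc (comb \<phi> U V) = comb (\<lambda>m n. - nrm (madd m n) * \<phi> m n) U V"
  by (simp add: lapc_def comb_def map_concat o_def algebra_simps)

lemma sum_list_swap: "(\<Sum>p\<leftarrow>A. \<Sum>q\<leftarrow>B. f p q) = (\<Sum>q\<leftarrow>B. \<Sum>p\<leftarrow>A. (f p q :: complex))"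
  by (induction A) (auto simp: sum_list_addf)

lemma ev_comb_append2: "ev (comb \<phi> V (A @ B)) x = ev (comb \<phi> V A) x + ev (comb \<phi> V B) x"
  unfolding ev_comb_list by (simp add: sum_list_addf)

lemma ev_comb_d11: "ev (comb \<phi> V (d1 (d1 U))) x = (\<Sum>p\<leftarrow>V. \<Sum>q\<leftarrow>U. - of_int (fst (snd q) * fst (snd q)) * fst p * fst q * of_real (\<phi> (snd p) (snd q)) * em (madd (snd p) (snd q)) x)"
  unfolding ev_comb_list d1_def by (simp add: o_def algebra_simps)
lemma ev_comb_d22: "ev (comb \<phi> V (d2 (d2 U))) x = (\<Sum>p\<leftarrow>V. \<Sum>q\<leftarrow>U. - of_int (snd (snd q) * snd (snd q)) * fst p * fst q * of_real (\<phi> (snd p) (snd q)) * em (madd (snd p) (snd q)) x)"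
  unfolding ev_comb_list d2_def by (simp add: o_def algebra_simps)

lemma cr_anti: "cr n m = - cr m n" by (simp add: cr_def)
lemma madd_comm: "madd n m = madd m n" by (simp add: madd_def add.commute)

lemma key_ev: "ev (lapc (comb gam U V)) x + ev (comb cr V (lapL U)) x = 0"
proof -
  have "ev (comb cr V (lapL U)) x = (\<Sum>p\<leftarrow>V. \<Sum>q\<leftarrow>U. - of_real (nrm (snd q)) * fst p * fst q * of_real (cr (snd p) (snd q)) * em (madd (snd p) (snd q)) x)"
    unfolding lapL_def ev_comb_append2 ev_comb_d11 ev_comb_d22 sum_list_addf[symmetric]
    by (simp add: nrm_def algebra_simps)
  also have "\<dots> = (\<Sum>q\<leftarrow>U. \<Sum>p\<leftarrow>V. - of_real (nrm (snd q)) * fst p * fst q * of_real (cr (snd p) (snd q)) * em (madd (snd p) (snd q)) x)"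
    by (rule sum_list_swap)
  finally have A: "ev (comb cr V (lapL U)) x = \<dots>" .
  have B: "ev (lapc (comb gam U V)) x = (\<Sum>q\<leftarrow>U. \<Sum>p\<leftarrow>V. fst q * fst p * of_real (- nrm (madd (snd q) (snd p)) * gam (snd q) (snd p)) * em (madd (snd q) (snd p)) x)"
    unfolding lapc_comb ev_comb_list ..
  have C: "- nrm (madd m n) * gam m n = nrm m * cr n m" for m n
  proof (cases "nrm (madd m n) = 0")
    case True
    then have "madd m n = (0,0)" by (simp add: nrm_zero_iff)
    then have "cr n m = 0" by (cases m; cases n) (simp add: cr_def madd_def add_eq_0_iff)
    then show ?thesis using True by simp
  next
    case False then show ?thesis using cr_anti[of n m] by (simp add: gam_def)
  qed
  show ?thesis unfolding A B C sum_list_addf[symmetric]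
    by (simp add: madd_comm algebra_simps)
qed

lemma realL_append: "realL A \<Longrightarrow> realL B \<Longrightarrow> realL (A @ B)"
  by (simp add: realL_def)

lemma realL_lapL: "realL U \<Longrightarrow> realL (lapL U)"
  unfolding lapL_def by (intro realL_append realL_d12)

lemma d12_comm: "d1 (d2 V) = d2 (d1 V)"
  by (induction V) (auto simp: algebra_simps)

lemma K1:
  assumes U: "realL U" and V: "realL V"
  shows "rf (d1 (d1 (comb gam U V))) x + rf (d2 (d2 (comb gam U V))) x
     + rf (d1 (lapL U)) x * rf (d2 V) x - rf (d2 (lapL U)) x * rf (d1 V) x = 0"
proof -
  note LU = realL_d12[OF realL_lapL[OF U]]
  note VV = realL_d12[OF V]
  have "ev (d1 (d1 (comb gam U V))) x + ev (d2 (d2 (comb gam U V))) x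
     + (ev (d2 V) x * ev (d1 (lapL U)) x - ev (d1 V) x * ev (d2 (lapL U)) x) = 0"
    using key_ev[of U V x] unfolding ev_lap ev_comb_cr by simp
  then have "Re (ev (d1 (d1 (comb gam U V))) x + ev (d2 (d2 (comb gam U V))) x
     + (ev (d1 (lapL U)) x * ev (d2 V) x - ev (d2 (lapL U)) x * ev (d1 V) x)) = 0"
    by (simp add: algebra_simps)
  then show ?thesis
    unfolding rf_mult[OF LU(1) VV(2)] rf_mult[OF LU(2) VV(1)] by (simp add: rf_def)
qed

lemma smooth_D: "smooth_fn w \<Longrightarrow> foldr pd ds w differentiable (at x)"
  unfolding smooth_fn_def by blast

lemma w_facts:
  assumes "smooth_fn w"
  shows "\<And>x. w differentiable (at x)" "\<And>x. pd1 w differentiable (at x)" "\<And>x. pd2 w differentiable (at x)"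
    "\<And>x. pd1 (pd1 w) differentiable (at x)" "\<And>x. pd2 (pd1 w) differentiable (at x)"
    "\<And>x. pd1 (pd2 w) differentiable (at x)" "\<And>x. pd2 (pd2 w) differentiable (at x)"
  using smooth_D[OF assms, of "[]"] smooth_D[OF assms, of "[False]"] smooth_D[OF assms, of "[True]"]
    smooth_D[OF assms, of "[False,False]"] smooth_D[OF assms, of "[True,False]"]
    smooth_D[OF assms, of "[False,True]"] smooth_D[OF assms, of "[True,True]"]
  by simp_all

lemma bop_ident:
  assumes U: "realL U" and V: "realL V" and w: "w \<in> lie_alg"
  shows "ip (rf (comb gam U V)) w = ip (rf U) (pbracket (rf V) w)"
proof -
  let ?B = "comb gam U V"
  have sw: "smooth_fn w" and pw1: "\<And>x1 x2. w (x1 + 2 * pi, x2) = w (x1, x2)"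
    and pw2: "\<And>x1 x2. w (x1, x2 + 2 * pi) = w (x1, x2)"
    using w by (auto simp: lie_alg_def)
  note wf = w_facts[OF sw]
  have Hw: "HD w (pd1 w) (pd2 w)" by (rule HD_diffble[OF wf(1)])
  have Hw1: "HD (pd1 w) (pd1 (pd1 w)) (pd2 (pd1 w))" by (rule HD_diffble[OF wf(2)])
  have Hw2: "HD (pd2 w) (pd1 (pd2 w)) (pd2 (pd2 w))" by (rule HD_diffble[OF wf(3)])
  have cw: "continuous_on UNIV w" "continuous_on UNIV (pd1 w)" "continuous_on UNIV (pd2 w)"
    "continuous_on UNIV (pd1 (pd1 w))" "continuous_on UNIV (pd2 (pd1 w))"
    "continuous_on UNIV (pd1 (pd2 w))" "continuous_on UNIV (pd2 (pd2 w))"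
    by (rule HD_cont[OF HD_diffble], use wf in blast)+
  have t1: "\<And>x. w (x + (2 * pi, 0)) = w x" using pw1 by (auto simp: prod_eq_iff)
  have t2: "\<And>x. w (x + (0, 2 * pi)) = w x" using pw2 by (auto simp: prod_eq_iff)
  have pp1: "pd1 w (x1 + 2 * pi, x2) = pd1 w (x1, x2)" "pd2 w (x1 + 2 * pi, x2) = pd2 w (x1, x2)" for x1 x2
    using per_pd[OF wf(1) t1, of "(x1, x2)"] by simp_all
  have pp2: "pd1 w (x1, x2 + 2 * pi) = pd1 w (x1, x2)" "pd2 w (x1, x2 + 2 * pi) = pd2 w (x1, x2)" for x1 x2
    using per_pd[OF wf(1) t2, of "(x1, x2)"] by simp_all
  have br: "pbracket (rf V) w = (\<lambda>x. rf (d2 V) x * pd1 w x - rf (d1 V) x * pd2 w x)"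
    by (simp add: pbracket_def fun_eq_iff)
  note Hbr = HD_diff[OF HD_mult[OF HD_rf Hw1] HD_mult[OF HD_rf Hw2], of "d2 V" "d1 V"]
  note brd = HD_pd[OF Hbr]
  note HP = HD_add[OF HD_diff[OF HD_mult[OF HD_rf Hw] HD_mult[OF HD_rf Hbr]] HD_mult[OF HD_mult[OF HD_rf HD_rf] Hw],
      of "d1 ?B" "d1 U" "lapL U" "d2 V"]
  note HQ = HD_diff[OF HD_diff[OF HD_mult[OF HD_rf Hw] HD_mult[OF HD_rf Hbr]] HD_mult[OF HD_mult[OF HD_rf HD_rf] Hw],
      of "d2 ?B" "d2 U" "lapL U" "d1 V"]
  let ?I1 = "\<lambda>x. rf (d1 (d1 ?B)) x * w x + rf (d1 ?B) x * pd1 w x -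
          (rf (d1 (d1 U)) x * (rf (d2 V) x * pd1 w x - rf (d1 V) x * pd2 w x) +
           rf (d1 U) x * (rf (d1 (d2 V)) x * pd1 w x + rf (d2 V) x * pd1 (pd1 w) x -
                          (rf (d1 (d1 V)) x * pd2 w x + rf (d1 V) x * pd1 (pd2 w) x))) +
          ((rf (d1 (lapL U)) x * rf (d2 V) x + rf (lapL U) x * rf (d1 (d2 V)) x) * w x +
           rf (lapL U) x * rf (d2 V) x * pd1 w x)"
  let ?I2 = "\<lambda>x. rf (d2 (d2 ?B)) x * w x + rf (d2 ?B) x * pd2 w x -
          (rf (d2 (d2 U)) x * (rf (d2 V) x * pd1 w x - rf (d1 V) x * pd2 w x) +
           rf (d2 U) x * (rf (d2 (d2 V)) x * pd1 w x + rf (d2 V) x * pd2 (pd1 w) x -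
                          (rf (d2 (d1 V)) x * pd2 w x + rf (d1 V) x * pd2 (pd2 w) x))) -
          ((rf (d2 (lapL U)) x * rf (d1 V) x + rf (lapL U) x * rf (d2 (d1 V)) x) * w x +
           rf (lapL U) x * rf (d1 V) x * pd2 w x)"
  have I1: "integral torus_box ?I1 = 0"
    by (rule div1[OF HP]) (auto intro!: continuous_intros continuous_rf cw simp: rf_per1 pw1 pp1)
  have I2: "integral torus_box ?I2 = 0"
    by (rule div2[OF HQ]) (auto intro!: continuous_intros continuous_rf cw simp: rf_per2 pw2 pp2)
  let ?IB = "\<lambda>x. rf (d1 ?B) x * pd1 w x + rf (d2 ?B) x * pd2 w x"
  let ?IU = "\<lambda>x. rf (d1 U) x * (rf (d1 (d2 V)) x * pd1 w x + rf (d2 V) x * pd1 (pd1 w) x -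
                          (rf (d1 (d1 V)) x * pd2 w x + rf (d1 V) x * pd1 (pd2 w) x))
       + rf (d2 U) x * (rf (d2 (d2 V)) x * pd1 w x + rf (d2 V) x * pd2 (pd1 w) x -
                          (rf (d2 (d1 V)) x * pd2 w x + rf (d1 V) x * pd2 (pd2 w) x))"
  have ipB: "ip (rf ?B) w = integral torus_box ?IB" by (simp add: ip_def)
  have ipU: "ip (rf U) (pbracket (rf V) w) = integral torus_box ?IU"
    unfolding ip_def br brd by simp
  have LUeq: "rf (lapL U) x = rf (d1 (d1 U)) x + rf (d2 (d2 U)) x" for x
    by (simp add: lapL_def rf_def)
  have eq: "?I1 x + ?I2 x = ?IB x - ?IU x" for x
  proof -
    have "?I1 x + ?I2 x - (?IB x - ?IU x) = w x * (rf (d1 (d1 ?B)) x + rf (d2 (d2 ?B)) x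
       + rf (d1 (lapL U)) x * rf (d2 V) x - rf (d2 (lapL U)) x * rf (d1 V) x)"
      unfolding LUeq d12_comm by (simp add: algebra_simps)
    also have "\<dots> = 0" using K1[OF U V, of x] by simp
    finally show ?thesis by simp
  qed
  have cB: "continuous_on UNIV ?IB" by (intro continuous_intros continuous_rf cw)
  have cU: "continuous_on UNIV ?IU" by (intro continuous_intros continuous_rf cw)
  have c1: "continuous_on UNIV ?I1" by (intro continuous_intros continuous_rf cw)
  have c2: "continuous_on UNIV ?I2" by (intro continuous_intros continuous_rf cw)
  have intg: "f integrable_on torus_box" if "continuous_on UNIV f" for f :: fn
    unfolding torus_box_eq by (rule integrable_continuous) (rule continuous_on_subset[OF that subset_UNIV])
  have "integral torus_box ?IB - integral torus_box ?IU = integral torus_box (\<lambda>x. ?IB x - ?IU x)"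
    by (rule integral_diff[symmetric]) (auto intro: intg cB cU)
  also have "\<dots> = integral torus_box (\<lambda>x. ?I1 x + ?I2 x)" by (simp only: eq)
  also have "\<dots> = integral torus_box ?I1 + integral torus_box ?I2"
    by (rule integral_add) (auto intro: intg c1 c2)
  also have "\<dots> = 0" using I1 I2 by simp
  finally show ?thesis unfolding ipB ipU by simp
qed

lemma per_int1:
  assumes "\<And>x1 x2. f (x1 + 2 * pi, x2) = f (x1, x2)"
  shows "f (x1 + of_int k * (2 * pi), x2) = f (x1, x2)"
proof (induction k arbitrary: x1 rule: int_induct[where k=0])
  case base then show ?case by simp
next
  case (step1 i) then show ?case using assms[of "x1 + of_int i * (2 * pi)" x2] by (simp add: algebra_simps)
next
  case (step2 i)
  have "f (x1 + of_int (i - 1) * (2 * pi), x2) = f (x1 + of_int (i - 1) * (2 * pi) + 2 * pi, x2)"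
    using assms by simp
  also have "\<dots> = f (x1 + of_int i * (2 * pi), x2)" by (simp add: algebra_simps)
  finally show ?case using step2 by simp
qed

lemma per_int2:
  assumes "\<And>x1 x2. f (x1, x2 + 2 * pi) = f (x1, x2)"
  shows "f (x1, x2 + of_int k * (2 * pi)) = f (x1, x2)"
proof (induction k arbitrary: x2 rule: int_induct[where k=0])
  case base then show ?case by simp
next
  case (step1 i) then show ?case using assms[of x1 "x2 + of_int i * (2 * pi)"] by (simp add: algebra_simps)
next
  case (step2 i)
  have "f (x1, x2 + of_int (i - 1) * (2 * pi)) = f (x1, x2 + of_int (i - 1) * (2 * pi) + 2 * pi)"
    using assms by simp
  also have "\<dots> = f (x1, x2 + of_int i * (2 * pi))" by (simp add: algebra_simps)
  finally show ?case using step2 by simp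
qed

lemma reduce_2pi: "\<exists>k::int. t - of_int k * (2 * pi) \<in> {0..2*pi}"
proof -
  let ?k = "\<lfloor>t / (2 * pi)\<rfloor>"
  have p: "2 * pi > 0" by simp
  have "of_int ?k \<le> t / (2 * pi)" "t / (2 * pi) < of_int ?k + 1" by linarith+
  then have "of_int ?k * (2 * pi) \<le> t / (2 * pi) * (2 * pi)" "t / (2 * pi) * (2 * pi) < (of_int ?k + 1) * (2 * pi)"
    using p by (intro mult_right_mono mult_strict_right_mono; simp)+
  then have "of_int ?k * (2 * pi) \<le> t" "t < (of_int ?k + 1) * (2 * pi)"
    by simp_all
  then have "0 \<le> t - of_int ?k * (2 * pi)" "t - of_int ?k * (2 * pi) \<le> 2 * pi"
    by (simp_all add: algebra_simps)
  then show ?thesis by (intro exI[of _ ?k]) simp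
qed

lemma per_from_box:
  assumes p1: "\<And>x1 x2. f (x1 + 2 * pi, x2) = f (x1, x2)" and p2: "\<And>x1 x2. f (x1, x2 + 2 * pi) = f (x1, x2)"
    and box: "\<And>x. x \<in> torus_box \<Longrightarrow> f x = c"
  shows "f x = c"
proof -
  obtain x1 x2 where x: "x = (x1, x2)" by (cases x)
  obtain k1 :: int where k1: "x1 - of_int k1 * (2 * pi) \<in> {0..2*pi}" using reduce_2pi by blast
  obtain k2 :: int where k2: "x2 - of_int k2 * (2 * pi) \<in> {0..2*pi}" using reduce_2pi by blast
  let ?y1 = "x1 - of_int k1 * (2 * pi)" and ?y2 = "x2 - of_int k2 * (2 * pi)"
  have "f (x1, x2) = f (?y1 + of_int k1 * (2 * pi), ?y2 + of_int k2 * (2 * pi))" by simp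
  also have "\<dots> = f (?y1, ?y2 + of_int k2 * (2 * pi))" by (rule per_int1[OF p1])
  also have "\<dots> = f (?y1, ?y2)" by (rule per_int2[OF p2])
  also have "\<dots> = c" using k1 k2 by (intro box) (simp add: torus_box_eq cbox_Pair_iff)
  finally show ?thesis using x by simp
qed

lemma smooth_diff:
  assumes "smooth_fn f" "smooth_fn g"
  shows "smooth_fn (\<lambda>x. f x - g x)"
proof -
  have "foldr pd ds (\<lambda>x. f x - g x) = (\<lambda>x. foldr pd ds f x - foldr pd ds g x)" for ds
  proof (induction ds)
    case Nil then show ?case by simp
  next
    case (Cons d ds)
    have df: "\<And>x. foldr pd ds f differentiable (at x)" "\<And>x. foldr pd ds g differentiable (at x)"
      by (rule smooth_D[OF assms(1)], rule smooth_D[OF assms(2)])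
    note H = HD_pd[OF HD_diff[OF HD_diffble[OF df(1)] HD_diffble[OF df(2)]]]
    show ?case using Cons H by (cases d) auto
  qed
  moreover have "(\<lambda>x. foldr pd ds f x - foldr pd ds g x) differentiable (at x)" for ds x
    using HD_D[OF HD_diff[OF HD_diffble[OF smooth_D[OF assms(1)]] HD_diffble[OF smooth_D[OF assms(2)]]]]
    unfolding differentiable_def by blast
  ultimately show ?thesis unfolding smooth_fn_def by simp
qed

lemma smooth_cont: "smooth_fn f \<Longrightarrow> continuous_on S (foldr pd ds f)"
  by (rule HD_cont[OF HD_diffble[OF smooth_D]])

lemma lie_diff:
  assumes "f \<in> lie_alg" "g \<in> lie_alg" shows "(\<lambda>x. f x - g x) \<in> lie_alg"
proof -
  have sf: "smooth_fn f" and sg: "smooth_fn g" using assms by (auto simp: lie_alg_def)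
  have cf: "continuous_on torus_box f" using smooth_cont[OF sf, of _ "[]"] by simp
  have cg: "continuous_on torus_box g" using smooth_cont[OF sg, of _ "[]"] by simp
  have "integral torus_box (\<lambda>x. f x - g x) = integral torus_box f - integral torus_box g"
    by (rule integral_diff) (auto simp: torus_box_eq intro!: integrable_continuous cf[unfolded torus_box_eq] cg[unfolded torus_box_eq])
  then show ?thesis using assms smooth_diff[OF sf sg] by (auto simp: lie_alg_def)
qed

lemma lie_zero:
  assumes g: "g \<in> lie_alg" and ip0: "ip g g = 0"
  shows "g = (\<lambda>x. 0)"
proof -
  have sg: "smooth_fn g" using g by (auto simp: lie_alg_def)
  have dg: "\<And>x. g differentiable (at x)" using smooth_D[OF sg, of "[]"] by simp
  have c1: "continuous_on S (pd1 g)" for S using smooth_cont[OF sg, of _ "[False]"] by simp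
  have c2: "continuous_on S (pd2 g)" for S using smooth_cont[OF sg, of _ "[True]"] by simp
  let ?h = "\<lambda>x. pd1 g x * pd1 g x + pd2 g x * pd2 g x"
  have ch: "continuous_on torus_box ?h" by (intro continuous_intros c1 c2)
  have "(?h has_integral 0) torus_box"
    using integrable_integral[OF integrable_continuous[OF ch[unfolded torus_box_eq]]] ip0
    by (simp add: ip_def torus_box_eq)
  moreover have bne: "box (0,0) (2*pi, 2*pi) \<noteq> ({} :: (real \<times> real) set)"
    by (simp add: box_ne_empty Basis_prod_def)
  ultimately have h0: "?h x = 0" if "x \<in> torus_box" for x
    using has_integral_0_cbox_imp_0[OF ch[unfolded torus_box_eq], of x] that
    by (simp add: torus_box_eq)
  have grad0: "pd1 g x = 0 \<and> pd2 g x = 0" if "x \<in> torus_box" for x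
    using h0[OF that] by (simp add: sum_squares_eq_zero_iff)
  obtain c where c: "\<forall>x\<in>torus_box. g x = c"
  proof -
    have "\<exists>c. \<forall>x\<in>torus_box. g x = c"
    proof (rule has_derivative_zero_constant)
      show "convex torus_box" by (simp add: torus_box_eq convex_box)
      fix x assume "x \<in> torus_box"
      have "(g has_derivative (\<lambda>h. fst h * pd1 g x + snd h * pd2 g x)) (at x within torus_box)"
        using deriv_decomp[OF dg] by (rule has_derivative_at_withinI)
      then show "(g has_derivative (\<lambda>h. 0)) (at x within torus_box)"
        using grad0[OF \<open>x \<in> torus_box\<close>] by simp
    qed
    then show ?thesis using that by blast
  qed
  have gc: "g x = c" for x
    by (rule per_from_box[where f=g]) (use g c in \<open>auto simp: lie_alg_def\<close>)
  have gfun: "g = (\<lambda>x. c)" using gc by auto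
  have "integral torus_box g = integral torus_box (\<lambda>x. c)" unfolding gfun ..
  also have "\<dots> = c * S_T" by (simp add: torus_box_eq S_T_def content_Pair power2_eq_square mult.commute)
  finally have "c * S_T = 0" using g by (simp add: lie_alg_def)
  then have "c = 0" by (simp add: S_T_def)
  then show ?thesis using gc by auto
qed

lemma ip_diff_left:
  assumes f: "smooth_fn f" and h: "smooth_fn h" and g: "smooth_fn g"
  shows "ip (\<lambda>x. f x - h x) g = ip f g - ip h g"
proof -
  note Hd = HD_pd[OF HD_diff[OF HD_diffble[OF smooth_D[OF f, of "[]", simplified]] HD_diffble[OF smooth_D[OF h, of "[]", simplified]]]]
  have c: "continuous_on S (foldr pd ds q)" if "smooth_fn q" for q ds S using smooth_cont[OF that] .
  have cf1: "continuous_on S (pd1 f)" "continuous_on S (pd2 f)" for S using c[OF f, where ds="[False]"] c[OF f, where ds="[True]"] by simp_all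
  have ch1: "continuous_on S (pd1 h)" "continuous_on S (pd2 h)" for S using c[OF h, where ds="[False]"] c[OF h, where ds="[True]"] by simp_all
  have cg1: "continuous_on S (pd1 g)" "continuous_on S (pd2 g)" for S using c[OF g, where ds="[False]"] c[OF g, where ds="[True]"] by simp_all
  have intg: "q integrable_on torus_box" if "continuous_on UNIV q" for q :: fn
    unfolding torus_box_eq by (rule integrable_continuous) (rule continuous_on_subset[OF that subset_UNIV])
  have "ip (\<lambda>x. f x - h x) g = integral torus_box (\<lambda>x. (pd1 f x * pd1 g x + pd2 f x * pd2 g x) - (pd1 h x * pd1 g x + pd2 h x * pd2 g x))"
    unfolding ip_def Hd by (simp add: algebra_simps)
  also have "\<dots> = ip f g - ip h g" unfolding ip_def
    by (rule integral_diff; rule intg; intro continuous_intros cf1 ch1 cg1)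
  finally show ?thesis .
qed

lemma lie_smooth: "f \<in> lie_alg \<Longrightarrow> smooth_fn f" by (simp add: lie_alg_def)

lemma Bop_unique:
  assumes b: "b \<in> lie_alg" and hb: "\<forall>w\<in>lie_alg. ip b w = ip u (pbracket v w)"
  shows "Bop u v = b"
  unfolding Bop_def
proof (rule the_equality)
  show "b \<in> lie_alg \<and> (\<forall>w\<in>lie_alg. ip b w = ip u (pbracket v w))" using b hb by blast
  fix b' assume "b' \<in> lie_alg \<and> (\<forall>w\<in>lie_alg. ip b' w = ip u (pbracket v w))"
  then have b': "b' \<in> lie_alg" and hb': "\<forall>w\<in>lie_alg. ip b' w = ip u (pbracket v w)" by auto
  let ?g = "\<lambda>x. b' x - b x"
  have g: "?g \<in> lie_alg" by (rule lie_diff[OF b' b])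
  have "ip ?g ?g = ip b' ?g - ip b ?g" by (rule ip_diff_left[OF lie_smooth[OF b'] lie_smooth[OF b] lie_smooth[OF g]])
  also have "\<dots> = 0" using hb hb' g by simp
  finally have "?g = (\<lambda>x. 0)" by (rule lie_zero[OF g])
  then show "b' = b" by (auto simp: fun_eq_iff dest: fun_cong)
qed

lemma cr_mneg[simp]: "cr (mneg m) (mneg n) = cr m n" by (simp add: cr_def)
lemma cr_mtil[simp]: "cr (mtil m) (mtil n) = - cr m n" by (simp add: cr_def)
lemma nrm_mneg[simp]: "nrm (mneg m) = nrm m" by (simp add: nrm_def)
lemma nrm_mtil[simp]: "nrm (mtil m) = nrm m" by (simp add: nrm_def)
lemma gam_mneg: "gam (mneg m) (mneg n) = gam m n" by (simp add: gam_def madd_mneg)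
lemma gam_mtil: "gam (mtil m) (mtil n) = - gam m n" by (simp add: gam_def madd_mtil)
lemma nrm_0[simp]: "nrm (0,0) = 0" by (simp add: nrm_def)

definition goodL :: "tl \<Rightarrow> bool" where "goodL U \<longleftrightarrow> realL U \<and> oddL U"

lemma comb_good: "goodL U \<Longrightarrow> goodL V \<Longrightarrow> (\<And>m n. \<phi> (mneg m) (mneg n) = \<phi> m n) \<Longrightarrow>
   (\<And>m n. \<phi> (mtil m) (mtil n) = - \<phi> m n) \<Longrightarrow> goodL (comb \<phi> U V)"
  unfolding goodL_def using comb_real comb_odd by blast

lemma Bop_rf:
  assumes U: "goodL U" and V: "goodL V"
  shows "Bop (rf U) (rf V) = rf (comb gam U V)"
proof (rule Bop_unique)
  have G: "goodL (comb gam U V)" by (rule comb_good[OF U V]) (rule gam_mneg, rule gam_mtil)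
  have "coef (comb gam U V) (0,0) = 0"
    by (rule coef_comb0) (simp add: gam_def)
  then show "rf (comb gam U V) \<in> lie_alg" using G by (intro lie_rf) (auto simp: goodL_def)
  show "\<forall>w\<in>lie_alg. ip (rf (comb gam U V)) w = ip (rf U) (pbracket (rf V) w)"
    using bop_ident U V by (auto simp: goodL_def)
qed

definition Gam :: "md \<Rightarrow> md \<Rightarrow> real" where "Gam m n = (cr m n - gam m n - gam n m) / 2"

lemma Gam_mneg: "Gam (mneg m) (mneg n) = Gam m n" by (simp add: Gam_def gam_mneg)
lemma Gam_mtil: "Gam (mtil m) (mtil n) = - Gam m n" by (simp add: Gam_def gam_mtil field_simps)

lemma ev_comb_swap: "ev (comb \<phi> V U) x = ev (comb (\<lambda>m n. \<phi> n m) U V) x"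
  unfolding ev_comb_list by (subst sum_list_swap) (simp add: madd_comm algebra_simps)

lemma sum_list_div: "(\<Sum>x\<leftarrow>xs. f x / (c::complex)) = (\<Sum>x\<leftarrow>xs. f x) / c"
  by (induction xs) (auto simp: add_divide_distrib)

lemma ev_comb_Gam: "ev (comb Gam U V) x = (ev (comb cr U V) x - ev (comb gam U V) x - ev (comb gam V U) x) / 2"
  unfolding ev_comb_swap[of gam V U] unfolding ev_comb_list sum_list_subtractf[symmetric]
  by (simp add: Gam_def sum_list_div[symmetric] diff_divide_distrib algebra_simps)

lemma conn_rf:
  assumes U: "goodL U" and V: "goodL V"
  shows "conn (rf U) (rf V) = rf (comb Gam U V)"
proof
  fix x
  have "pbracket (rf U) (rf V) = rf (comb cr U V)" using U V by (intro pbracket_rf) (auto simp: goodL_def)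
  then show "conn (rf U) (rf V) x = rf (comb Gam U V) x"
    unfolding conn_def Bop_rf[OF U V] Bop_rf[OF V U] by (simp add: rf_def ev_comb_Gam)
qed

definition curvL :: "tl \<Rightarrow> tl \<Rightarrow> tl \<Rightarrow> tl" where
  "curvL U V W = negL (comb Gam U (comb Gam V W)) @ comb Gam V (comb Gam U W) @ comb Gam (comb cr U V) W"

lemma rf_append: "rf (A @ B) x = rf A x + rf B x" by (simp add: rf_def)
lemma rf_negL: "rf (negL A) x = - rf A x" by (simp add: rf_def ev_negL)

lemma good_Gam: "goodL U \<Longrightarrow> goodL V \<Longrightarrow> goodL (comb Gam U V)"
  by (rule comb_good) (assumption | rule Gam_mneg Gam_mtil)+
lemma good_cr: "goodL U \<Longrightarrow> goodL V \<Longrightarrow> goodL (comb cr U V)"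
  by (rule comb_good) (assumption | rule cr_mneg cr_mtil)+

lemma curv_rf:
  assumes U: "goodL U" and V: "goodL V" and W: "goodL W"
  shows "curv (rf U) (rf V) (rf W) = rf (curvL U V W)"
proof
  fix x
  have pb: "pbracket (rf U) (rf V) = rf (comb cr U V)" using U V by (intro pbracket_rf) (auto simp: goodL_def)
  show "curv (rf U) (rf V) (rf W) x = rf (curvL U V W) x"
    unfolding curv_def curvL_def rf_append rf_negL pb
    by (simp add: conn_rf U V W good_Gam good_cr)
qed

lemma realL_negL: "realL A \<Longrightarrow> realL (negL A)" by (simp add: realL_def ev_negL)

lemma good_real: "goodL U \<Longrightarrow> realL U" by (simp add: goodL_def)

lemma realL_curvL: "goodL U \<Longrightarrow> goodL V \<Longrightarrow> goodL W \<Longrightarrow> realL (curvL U V W)"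
  unfolding curvL_def
  by (intro realL_append realL_negL good_real good_Gam good_cr)

lemma sum_comb: "(\<Sum>q\<leftarrow>comb \<phi> A B. f q) = (\<Sum>a\<leftarrow>A. \<Sum>b\<leftarrow>B. (f (fst a * fst b * of_real (\<phi> (snd a) (snd b)), madd (snd a) (snd b)) :: complex))"
  by (induction A) (auto simp: comb_def o_def)

lemma sum_list_neg: "(\<Sum>x\<leftarrow>xs. - f x) = - (\<Sum>x\<leftarrow>xs. (f x :: complex))"
  by (induction xs) auto

lemma comb_append1: "comb \<phi> (A @ B) V = comb \<phi> A V @ comb \<phi> B V" by (simp add: comb_def)
lemma if_neg0: "(if c then - x else 0) = - (if c then x else (0::complex))" by simp
lemma coef_comb_negL: "coef (comb \<phi> (negL A) V) p = - coef (comb \<phi> A V) p"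
  by (simp add: coef_comb negL_def o_def sum_list_neg[symmetric] if_neg0 cong: if_cong)

definition Rf :: "md \<Rightarrow> md \<Rightarrow> md \<Rightarrow> real" where
  "Rf m n p = - Gam n p * Gam m (madd n p) + Gam m p * Gam n (madd m p) + cr m n * Gam (madd m n) p"

lemma madd_assoc: "madd (madd a b) c = madd a (madd b c)" by (simp add: madd_def add.assoc)
lemma madd_lcomm: "madd a (madd b c) = madd b (madd a c)" by (simp add: madd_def add.left_commute)

definition NUM :: "tl \<Rightarrow> tl \<Rightarrow> complex" where
  "NUM U V = (\<Sum>a\<leftarrow>U. \<Sum>c\<leftarrow>U. \<Sum>b\<leftarrow>V. \<Sum>d\<leftarrow>V.
     if madd (snd a) (madd (snd b) (madd (snd c) (snd d))) = (0,0)
     then fst a * fst b * fst c * fst d * of_real (Rf (snd a) (snd b) (snd c) * dotn (madd (snd a) (madd (snd b) (snd c))) (snd d))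
     else 0)"

lemma coef_curv: "coef (comb dotn (curvL U V U) V) (0,0) = NUM U V"
proof -
  let ?g = "\<lambda>q. \<Sum>d\<leftarrow>V. if madd (snd q) (snd d) = (0,0) then fst q * fst d * of_real (dotn (snd q) (snd d)) else 0"
  have c: "coef (comb dotn X V) (0,0) = (\<Sum>q\<leftarrow>X. ?g q)" for X unfolding coef_comb ..
  have mid: "(\<Sum>b\<leftarrow>V. \<Sum>a\<leftarrow>U. H b a) = (\<Sum>a\<leftarrow>U. \<Sum>b\<leftarrow>V. H b a)" for H :: "_ \<Rightarrow> _ \<Rightarrow> complex"
    by (rule sum_list_swap)
  have "coef (comb dotn (curvL U V U) V) (0,0) =
     - (\<Sum>a\<leftarrow>U. \<Sum>b\<leftarrow>V. \<Sum>c\<leftarrow>U. ?g (fst a * (fst b * fst c * of_real (Gam (snd b) (snd c))) * of_real (Gam (snd a) (madd (snd b) (snd c))), madd (snd a) (madd (snd b) (snd c))))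
     + (\<Sum>b\<leftarrow>V. \<Sum>a\<leftarrow>U. \<Sum>c\<leftarrow>U. ?g (fst b * (fst a * fst c * of_real (Gam (snd a) (snd c))) * of_real (Gam (snd b) (madd (snd a) (snd c))), madd (snd b) (madd (snd a) (snd c))))
     + (\<Sum>a\<leftarrow>U. \<Sum>b\<leftarrow>V. \<Sum>c\<leftarrow>U. ?g (fst a * fst b * of_real (cr (snd a) (snd b)) * fst c * of_real (Gam (madd (snd a) (snd b)) (snd c)), madd (madd (snd a) (snd b)) (snd c)))"
    unfolding curvL_def comb_append1 coef_append coef_comb_negL c sum_comb by (simp cong: if_cong)
  also have "\<dots> = NUM U V"
    unfolding NUM_def
    apply (simp only: mid)
    apply (simp only: sum_list_addf[symmetric] sum_list_neg[symmetric])
    apply (simp add: Rf_def madd_assoc madd_lcomm madd_comm algebra_simps if_distrib cong: if_cong)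
    done
  finally show ?thesis .
qed

lemma ip_curv:
  assumes U: "goodL U" and V: "goodL V"
  shows "ip (curv (rf U) (rf V) (rf U)) (rf V) = S_T * Re (NUM U V)"
  unfolding curv_rf[OF U V U] ip_rf[OF realL_curvL[OF U V U] good_real[OF V]] coef_curv ..

definition dt :: "md \<Rightarrow> md \<Rightarrow> real" where "dt m n = of_int (fst m * fst n + snd m * snd n)"

lemma dt_comm: "dt n m = dt m n" by (simp add: dt_def mult.commute)

lemma nrm_madd: "nrm (madd m n) = nrm m + 2 * dt m n + nrm n"
  by (simp add: nrm_def dt_def madd_def algebra_simps)

lemma cr_self_neg: "madd m n = (0,0) \<Longrightarrow> cr m n = 0"
  by (cases m; cases n) (simp add: cr_def madd_def add_eq_0_iff)

lemma Gam_closed: "Gam m n = cr m n * dt n (madd m n) / nrm (madd m n)"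
proof (cases "nrm (madd m n) = 0")
  case True
  then have "madd m n = (0,0)" by (simp add: nrm_zero_iff)
  then have "cr m n = 0" by (rule cr_self_neg)
  then show ?thesis using True by (simp add: Gam_def gam_def cr_anti[of n m])
next
  case False
  have e: "dt n (madd m n) = dt m n + nrm n" by (simp add: dt_def nrm_def madd_def algebra_simps)
  have "Gam m n = cr m n * (nrm (madd m n) - nrm m + nrm n) / (2 * nrm (madd m n))"
    using False unfolding Gam_def gam_def cr_anti[of n m] by (simp add: field_simps madd_comm)
  also have "nrm (madd m n) - nrm m + nrm n = 2 * dt n (madd m n)"
    unfolding e nrm_madd by simp
  finally show ?thesis using False by simp
qed

definition T :: "md \<Rightarrow> md \<Rightarrow> real" where "T m n = Rf m n (mneg m) * nrm n"

lemma Rformula: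
  assumes n: "nrm n \<noteq> 0"
  shows "T m n = - (cr m n ^ 4 / nrm (madd m (mneg n)))"
proof -
  obtain x1 x2 where m: "m = (x1, x2)" by (cases m)
  obtain y1 y2 where nn: "n = (y1, y2)" by (cases n)
  let ?P = "cr m n" and ?D = "dt m n" and ?M = "nrm m" and ?N = "nrm n" and ?E = "nrm (madd m (mneg n))"
  have E: "?E = ?M - 2 * ?D + ?N" by (simp add: m nn nrm_def dt_def madd_def mneg_def algebra_simps)
  have lag: "?M * ?N - ?D ^ 2 = ?P ^ 2" by (simp add: m nn nrm_def dt_def cr_def power2_eq_square algebra_simps)
  have g1: "Gam n (mneg m) = ?P * (?M - ?D) / nrm (madd n (mneg m))"
    unfolding Gam_closed by (simp add: m nn cr_def dt_def nrm_def madd_def mneg_def algebra_simps)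
  have E': "nrm (madd n (mneg m)) = ?E" by (simp add: m nn nrm_def madd_def mneg_def algebra_simps)
  have g2: "Gam m (madd n (mneg m)) = ?P * (?N - ?D) / ?N"
    unfolding Gam_closed by (simp add: m nn cr_def dt_def nrm_def madd_def mneg_def algebra_simps)
  have g3: "Gam m (mneg m) = 0" unfolding Gam_closed by (simp add: m cr_def)
  have g4: "Gam (madd m n) (mneg m) = ?P * (- ?D) / ?N"
    unfolding Gam_closed by (simp add: m nn cr_def dt_def nrm_def madd_def mneg_def algebra_simps)
  have T1: "T m n = (- (?P * (?M - ?D) / ?E) * (?P * (?N - ?D) / ?N) + ?P * (?P * (- ?D) / ?N)) * ?N"
    unfolding T_def Rf_def g1 E' g2 g3 g4 by simp
  show ?thesis
  proof (cases "?E = 0")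
    case True
    then have "madd m (mneg n) = (0,0)" by (simp add: nrm_zero_iff)
    then have "m = n" by (simp add: m nn madd_def mneg_def)
    then have "?P = 0" by (simp add: cr_def)
    then show ?thesis using T1 by simp
  next
    case False
    have "T m n = - (?P ^ 2) * (((?M - ?D) * (?N - ?D) + ?D * ?E) / ?E)"
      unfolding T1 using n False by (simp add: field_simps power2_eq_square)
    also have "(?M - ?D) * (?N - ?D) + ?D * ?E = ?M * ?N - ?D ^ 2"
      unfolding E by (simp add: algebra_simps power2_eq_square)
    finally show ?thesis unfolding lag by (simp add: power2_eq_square power4_eq_xxxx)
  qed
qed

lemma sum_list_cong_set: "(\<And>x. x \<in> set xs \<Longrightarrow> f x = g x) \<Longrightarrow> (\<Sum>x\<leftarrow>xs. f x) = (\<Sum>x\<leftarrow>xs. (g x :: complex))"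
  by (metis map_cong)

lemma sum_delta_coef: "(\<Sum>d\<leftarrow>V. fst d * (if snd d = p then y else 0)) = coef V p * y"
  by (induction V) (auto simp: algebra_simps)

lemma dotn_final: "dotn (madd m (madd n (mneg m))) (mneg n) = nrm n"
  by (simp add: dotn_def nrm_def madd_def mneg_def)

lemma NUM_reduce:
  assumes cond: "\<And>a c b d. a \<in> set U \<Longrightarrow> c \<in> set U \<Longrightarrow> b \<in> set V \<Longrightarrow> d \<in> set V \<Longrightarrow>
      (madd (snd a) (madd (snd b) (madd (snd c) (snd d))) = (0,0)) = (snd c = mneg (snd a) \<and> snd d = mneg (snd b))"
  shows "NUM U V = (\<Sum>a\<leftarrow>U. fst a * coef U (mneg (snd a)) * (\<Sum>b\<leftarrow>V. fst b * coef V (mneg (snd b)) * of_real (T (snd a) (snd b))))"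
proof -
  have A: "(\<Sum>d\<leftarrow>V. if madd (snd a) (madd (snd b) (madd (snd c) (snd d))) = (0,0)
     then fst a * fst b * fst c * fst d * of_real (Rf (snd a) (snd b) (snd c) * dotn (madd (snd a) (madd (snd b) (snd c))) (snd d))
     else 0) = fst c * (if snd c = mneg (snd a) then fst a * (fst b * coef V (mneg (snd b)) * of_real (T (snd a) (snd b))) else 0)"
    if a: "a \<in> set U" and c: "c \<in> set U" and b: "b \<in> set V" for a b c
  proof -
    have "(\<Sum>d\<leftarrow>V. if madd (snd a) (madd (snd b) (madd (snd c) (snd d))) = (0,0)
     then fst a * fst b * fst c * fst d * of_real (Rf (snd a) (snd b) (snd c) * dotn (madd (snd a) (madd (snd b) (snd c))) (snd d))
     else 0) = (\<Sum>d\<leftarrow>V. fst d * (if snd d = mneg (snd b) then (if snd c = mneg (snd a) then fst a * fst b * fst c * of_real (T (snd a) (snd b)) else 0) else 0))"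
    proof (rule sum_list_cong_set)
      fix d assume d: "d \<in> set V"
      show "(if madd (snd a) (madd (snd b) (madd (snd c) (snd d))) = (0,0)
     then fst a * fst b * fst c * fst d * of_real (Rf (snd a) (snd b) (snd c) * dotn (madd (snd a) (madd (snd b) (snd c))) (snd d))
     else 0) = fst d * (if snd d = mneg (snd b) then (if snd c = mneg (snd a) then fst a * fst b * fst c * of_real (T (snd a) (snd b)) else 0) else 0)"
        unfolding cond[OF a c b d] by (auto simp: dotn_final T_def)
    qed
    also have "\<dots> = fst c * (if snd c = mneg (snd a) then fst a * (fst b * coef V (mneg (snd b)) * of_real (T (snd a) (snd b))) else 0)"
      unfolding sum_delta_coef by simp
    finally show ?thesis .
  qed
  have "NUM U V = (\<Sum>a\<leftarrow>U. \<Sum>c\<leftarrow>U. fst c * (if snd c = mneg (snd a) then fst a * (\<Sum>b\<leftarrow>V. fst b * coef V (mneg (snd b)) * of_real (T (snd a) (snd b))) else 0))"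
    unfolding NUM_def
  proof (rule sum_list_cong_set, rule sum_list_cong_set)
    fix a c assume a: "a \<in> set U" and c: "c \<in> set U"
    have "(\<Sum>b\<leftarrow>V. \<Sum>d\<leftarrow>V. if madd (snd a) (madd (snd b) (madd (snd c) (snd d))) = (0,0)
     then fst a * fst b * fst c * fst d * of_real (Rf (snd a) (snd b) (snd c) * dotn (madd (snd a) (madd (snd b) (snd c))) (snd d))
     else 0) = (\<Sum>b\<leftarrow>V. fst c * (if snd c = mneg (snd a) then fst a * (fst b * coef V (mneg (snd b)) * of_real (T (snd a) (snd b))) else 0))"
      by (rule sum_list_cong_set) (rule A[OF a c])
    also have "\<dots> = fst c * (if snd c = mneg (snd a) then fst a * (\<Sum>b\<leftarrow>V. fst b * coef V (mneg (snd b)) * of_real (T (snd a) (snd b))) else 0)"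
      by (simp add: sum_list_const_mult)
    finally show "(\<Sum>b\<leftarrow>V. \<Sum>d\<leftarrow>V. if madd (snd a) (madd (snd b) (madd (snd c) (snd d))) = (0,0)
     then fst a * fst b * fst c * fst d * of_real (Rf (snd a) (snd b) (snd c) * dotn (madd (snd a) (madd (snd b) (snd c))) (snd d))
     else 0) = fst c * (if snd c = mneg (snd a) then fst a * (\<Sum>b\<leftarrow>V. fst b * coef V (mneg (snd b)) * of_real (T (snd a) (snd b))) else 0)" .
  qed
  also have "\<dots> = (\<Sum>a\<leftarrow>U. fst a * coef U (mneg (snd a)) * (\<Sum>b\<leftarrow>V. fst b * coef V (mneg (snd b)) * of_real (T (snd a) (snd b))))"
    unfolding sum_delta_coef by (simp add: algebra_simps)
  finally show ?thesis .
qed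

definition sgn2 :: "nat \<Rightarrow> complex" where "sgn2 k2 = (-1) ^ (k2 + 1)"

definition xiL :: "complex \<Rightarrow> nat \<Rightarrow> nat \<Rightarrow> tl" where
  "xiL a k1 k2 = [(a, (int k1, int k2)), (cnj a, (- int k1, - int k2)),
     (sgn2 k2 * cnj a, (int k1, - int k2)), (sgn2 k2 * a, (- int k1, int k2))]"

lemma sgn2_sq[simp]: "sgn2 k * sgn2 k = 1" by (simp add: sgn2_def power_mult_distrib[symmetric])
lemma sgn2_sq2[simp]: "sgn2 k * (sgn2 k * x) = x" by (simp add: mult.assoc[symmetric])
lemma cnj_sgn2[simp]: "cnj (sgn2 k) = sgn2 k" by (simp add: sgn2_def)
lemma sgn2_real: "sgn2 k = of_real (if even k then -1 else 1)" by (simp add: sgn2_def)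

lemma xi_rf: "xi a k1 k2 = rf (xiL a k1 k2)"
  by (rule ext) (simp add: xi_def rf_def xiL_def ev_def em_def ee_def sgn2_def algebra_simps)

lemma em_conj_pair: "em (a, - b) x = cnj (em (- a, b) x)"
  using em_mneg[of "(-a, b)" x] by (simp add: mneg_def)

lemma xiL_real: "realL (xiL a k1 k2)"
  unfolding realL_def
proof
  fix x
  let ?z = "a * em (int k1, int k2) x" and ?w = "a * em (- int k1, int k2) x"
  have "ev (xiL a k1 k2) x = (?z + cnj ?z) + sgn2 k2 * (cnj ?w + ?w)"
    using em_mneg[of "(int k1, int k2)" x] em_conj_pair[of "int k1" "int k2" x]
    by (simp add: xiL_def mneg_def algebra_simps)
  then show "Im (ev (xiL a k1 k2) x) = 0" by (simp add: sgn2_real)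
qed

lemma psig_sgn2: "psig (i, int k2) = - sgn2 k2" "psig (i, - int k2) = - sgn2 k2"
  by (simp_all add: psig_def sgn2_def)

lemma xiL_odd: "oddL (xiL a k1 k2)"
  unfolding oddL_def
proof (intro allI)
  fix x1 x2
  show "ev (xiL a k1 k2) (2 * pi - x1, pi + x2) = - ev (xiL a k1 k2) (x1, x2)"
    unfolding xiL_def ev_Cons ev_Nil fst_conv snd_conv em_I
    by (simp add: psig_sgn2 mtil_def algebra_simps)
qed

lemma xiL_good: "goodL (xiL a k1 k2)" by (simp add: goodL_def xiL_real xiL_odd)

lemma xi_zero: "k1 = 0 \<Longrightarrow> k2 = 0 \<Longrightarrow> xi a k1 k2 = (\<lambda>_. 0)"
  by (rule ext) (simp add: xi_def ee_def)

lemma madd_zero_iff: "madd m n = (0,0) \<longleftrightarrow> n = mneg m"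
  by (cases m; cases n) (auto simp: madd_def mneg_def)

lemma dotn_mneg: "dotn m (mneg m) = nrm m" by (simp add: dotn_def nrm_def mneg_def)

lemma ip_self:
  assumes "\<And>q. q \<in> set U \<Longrightarrow> nrm (snd q) = c"
  shows "coef (comb dotn U U) (0,0) = of_real c * (\<Sum>a\<leftarrow>U. fst a * coef U (mneg (snd a)))"
proof -
  have "coef (comb dotn U U) (0,0) = (\<Sum>a\<leftarrow>U. \<Sum>b\<leftarrow>U. fst b * (if snd b = mneg (snd a) then fst a * of_real c else 0))"
    unfolding coef_comb
  proof (rule sum_list_cong_set, rule sum_list_cong_set)
    fix a b assume a: "a \<in> set U" and b: "b \<in> set U"
    show "(if madd (snd a) (snd b) = (0,0) then fst a * fst b * of_real (dotn (snd a) (snd b)) else 0)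
       = fst b * (if snd b = mneg (snd a) then fst a * of_real c else 0)"
      using assms[OF a] by (auto simp: madd_zero_iff dotn_mneg)
  qed
  also have "\<dots> = of_real c * (\<Sum>a\<leftarrow>U. fst a * coef U (mneg (snd a)))"
    unfolding sum_delta_coef by (simp add: sum_list_const_mult[symmetric] algebra_simps)
  finally show ?thesis .
qed

lemma ip_cross:
  assumes "\<And>a b. a \<in> set U \<Longrightarrow> b \<in> set V \<Longrightarrow> madd (snd a) (snd b) \<noteq> (0,0)"
  shows "coef (comb dotn U V) (0,0) = 0"
proof -
  have "coef (comb dotn U V) (0,0) = (\<Sum>a\<leftarrow>U. \<Sum>b\<leftarrow>V. 0)"
    unfolding coef_comb
    by (rule sum_list_cong_set, rule sum_list_cong_set) (use assms in auto)
  then show ?thesis by simp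
qed

lemma Aa_pos:
  assumes R: "realL U" and nz: "rf U \<noteq> (\<lambda>_. 0)"
  shows "Im (\<Sum>a\<leftarrow>U. fst a * coef U (mneg (snd a))) = 0"
    "Re (\<Sum>a\<leftarrow>U. fst a * coef U (mneg (snd a))) > 0"
proof -
  have "(\<Sum>a\<leftarrow>U. fst a * coef U (mneg (snd a))) = (\<Sum>m\<in>msym U. coef U m * coef U (mneg m))"
    using sumlist_coef[OF msym_finite msym_sub, where g="\<lambda>m. coef U (mneg m)" and V=U] .
  also have "\<dots> = (\<Sum>m\<in>msym U. of_real ((cmod (coef U m))^2))"
    by (rule sum.cong[OF refl]) (simp only: realL_coef[OF R] complex_norm_square)
  also have "\<dots> = of_real (\<Sum>m\<in>msym U. (cmod (coef U m))^2)" by simp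
  finally have eq: "(\<Sum>a\<leftarrow>U. fst a * coef U (mneg (snd a))) = of_real (\<Sum>m\<in>msym U. (cmod (coef U m))^2)" .
  then show "Im (\<Sum>a\<leftarrow>U. fst a * coef U (mneg (snd a))) = 0" by simp
  have "(\<Sum>m\<in>msym U. (cmod (coef U m))^2) \<noteq> 0"
  proof
    assume "(\<Sum>m\<in>msym U. (cmod (coef U m))^2) = 0"
    then have "\<forall>m\<in>msym U. (cmod (coef U m))^2 = 0"
      by (subst (asm) sum_nonneg_eq_0_iff) auto
    then have z: "\<forall>m\<in>msym U. coef U m = 0" by simp
    have "rf U x = 0" for x
      using ev_coef[OF msym_finite msym_sub, of U x] z by (simp add: rf_def)
    then show False using nz by auto
  qed
  moreover have "(\<Sum>m\<in>msym U. (cmod (coef U m))^2) \<ge> 0" by (simp add: sum_nonneg)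
  ultimately show "Re (\<Sum>a\<leftarrow>U. fst a * coef U (mneg (snd a))) > 0" using eq by simp
qed

lemma Tc: "nrm n \<noteq> 0 \<Longrightarrow> cr m n ^ 2 = X ^ 2 \<Longrightarrow> nrm (madd m (mneg n)) = D \<Longrightarrow> T m n = - (X ^ 4 / D)"
proof -
  assume a: "nrm n \<noteq> 0" "cr m n ^ 2 = X ^ 2" "nrm (madd m (mneg n)) = D"
  have p: "y ^ 4 = (y ^ 2) ^ 2" for y :: real by (simp add: power_mult[symmetric])
  have "cr m n ^ 4 = X ^ 4" unfolding p a(2) ..
  then show ?thesis using Rformula[OF a(1)] a(3) by simp
qed

lemma quad:
  fixes x y z w k l :: int
  assumes "x \<in> {k, -k}" "y \<in> {k, -k}" "z \<in> {l, -l}" "w \<in> {l, -l}" "0 \<le> k" "0 \<le> l" "k \<noteq> l"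
  shows "(x + (z + (y + w)) = 0) = (y = - x \<and> w = - z)"
  using assms by auto

lemma sum4: "X = [e1, e2, e3, e4] \<Longrightarrow> (\<Sum>a\<leftarrow>X. g a) = g e1 + g e2 + g e3 + (g e4 :: complex)"
  by simp

lemma NUM_reduce':
  assumes "\<And>a c b d. a \<in> set U \<Longrightarrow> c \<in> set U \<Longrightarrow> b \<in> set V \<Longrightarrow> d \<in> set V \<Longrightarrow>
      (madd (snd a) (madd (snd b) (madd (snd c) (snd d))) = (0,0)) = (snd c = mneg (snd a) \<and> snd d = mneg (snd b))"
  and "U' = U" "V' = V"
  shows "NUM U V = (\<Sum>a\<leftarrow>U'. fst a * coef U (mneg (snd a)) * (\<Sum>b\<leftarrow>V'. fst b * coef V (mneg (snd b)) * of_real (T (snd a) (snd b))))"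
  using NUM_reduce[OF assms(1)] assms(2,3) by simp

lemma xiL_modes: "q \<in> set (xiL a k1 k2) \<Longrightarrow> fst (snd q) \<in> {int k1, - int k1} \<and> snd (snd q) \<in> {int k2, - int k2}"
  by (auto simp: xiL_def)

lemma xiL_nrm: "q \<in> set (xiL a k1 k2) \<Longrightarrow> nrm (snd q) = real k1 ^ 2 + real k2 ^ 2"
  by (auto simp: xiL_def nrm_def power2_eq_square)

lemma xiL_cond:
  assumes "k1 \<noteq> l1" "k2 \<noteq> l2"
    and "a \<in> set (xiL p k1 k2)" "c \<in> set (xiL p k1 k2)" "b \<in> set (xiL r l1 l2)" "d \<in> set (xiL r l1 l2)"
  shows "(madd (snd a) (madd (snd b) (madd (snd c) (snd d))) = (0,0)) = (snd c = mneg (snd a) \<and> snd d = mneg (snd b))"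
proof -
  note ma = xiL_modes[OF assms(3)] and mc = xiL_modes[OF assms(4)]
  note nb = xiL_modes[OF assms(5)] and nd = xiL_modes[OF assms(6)]
  have e1: "(fst (snd a) + (fst (snd b) + (fst (snd c) + fst (snd d))) = 0) = (fst (snd c) = - fst (snd a) \<and> fst (snd d) = - fst (snd b))"
    by (rule quad[where k="int k1" and l="int l1"]) (use ma mc nb nd assms(1) in simp_all)
  have e2: "(snd (snd a) + (snd (snd b) + (snd (snd c) + snd (snd d))) = 0) = (snd (snd c) = - snd (snd a) \<and> snd (snd d) = - snd (snd b))"
    by (rule quad[where k="int k2" and l="int l2"]) (use ma mc nb nd assms(2) in simp_all)
  show ?thesis unfolding prod_eq_iff madd_simps mneg_simps fst_conv snd_conv e1 e2 by blast
qed

lemma xiL_cross: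
  assumes "k1 \<noteq> l1" "a \<in> set (xiL p k1 k2)" "b \<in> set (xiL r l1 l2)"
  shows "madd (snd a) (snd b) \<noteq> (0,0)"
  using xiL_modes[OF assms(2)] xiL_modes[OF assms(3)] assms(1) by (auto simp: madd_def)

definition FF :: "nat \<Rightarrow> nat \<Rightarrow> nat \<Rightarrow> nat \<Rightarrow> real" where
  "FF k1 k2 l1 l2 = ((real k1 * real l2 - real k2 * real l1) ^ 4 / ((real k1 + real l1) ^ 2 + (real k2 + real l2) ^ 2) + (real k1 * real l2 - real k2 * real l1) ^ 4 / ((real k1 - real l1) ^ 2 + (real k2 - real l2) ^ 2) + (- real k1 * real l2 - real k2 * real l1) ^ 4 / ((real k1 + real l1) ^ 2 + (real k2 - real l2) ^ 2) + (- real k1 * real l2 - real k2 * real l1) ^ 4 / ((real k1 - real l1) ^ 2 + (real k2 + real l2) ^ 2))"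

lemma T11: assumes lnz: "l1 \<noteq> 0 \<or> l2 \<noteq> 0" shows "T (int k1, int k2) (int l1, int l2) = - ((real k1 * real l2 - real k2 * real l1) ^ 4 / ((real k1 - real l1) ^ 2 + (real k2 - real l2) ^ 2))"
  by (rule Tc) (use lnz in \<open>simp_all add: cr_def nrm_def madd_def mneg_def power2_eq_square algebra_simps\<close>)

lemma T12: assumes lnz: "l1 \<noteq> 0 \<or> l2 \<noteq> 0" shows "T (int k1, int k2) (- int l1, - int l2) = - ((real k1 * real l2 - real k2 * real l1) ^ 4 / ((real k1 + real l1) ^ 2 + (real k2 + real l2) ^ 2))"
  by (rule Tc) (use lnz in \<open>simp_all add: cr_def nrm_def madd_def mneg_def power2_eq_square algebra_simps\<close>)

lemma T13: assumes lnz: "l1 \<noteq> 0 \<or> l2 \<noteq> 0" shows "T (int k1, int k2) (int l1, - int l2) = - ((- real k1 * real l2 - real k2 * real l1) ^ 4 / ((real k1 - real l1) ^ 2 + (real k2 + real l2) ^ 2))"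
  by (rule Tc) (use lnz in \<open>simp_all add: cr_def nrm_def madd_def mneg_def power2_eq_square algebra_simps\<close>)

lemma T14: assumes lnz: "l1 \<noteq> 0 \<or> l2 \<noteq> 0" shows "T (int k1, int k2) (- int l1, int l2) = - ((- real k1 * real l2 - real k2 * real l1) ^ 4 / ((real k1 + real l1) ^ 2 + (real k2 - real l2) ^ 2))"
  by (rule Tc) (use lnz in \<open>simp_all add: cr_def nrm_def madd_def mneg_def power2_eq_square algebra_simps\<close>)

lemma T21: assumes lnz: "l1 \<noteq> 0 \<or> l2 \<noteq> 0" shows "T (- int k1, - int k2) (int l1, int l2) = - ((real k1 * real l2 - real k2 * real l1) ^ 4 / ((real k1 + real l1) ^ 2 + (real k2 + real l2) ^ 2))"
  by (rule Tc) (use lnz in \<open>simp_all add: cr_def nrm_def madd_def mneg_def power2_eq_square algebra_simps\<close>)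

lemma T22: assumes lnz: "l1 \<noteq> 0 \<or> l2 \<noteq> 0" shows "T (- int k1, - int k2) (- int l1, - int l2) = - ((real k1 * real l2 - real k2 * real l1) ^ 4 / ((real k1 - real l1) ^ 2 + (real k2 - real l2) ^ 2))"
  by (rule Tc) (use lnz in \<open>simp_all add: cr_def nrm_def madd_def mneg_def power2_eq_square algebra_simps\<close>)

lemma T23: assumes lnz: "l1 \<noteq> 0 \<or> l2 \<noteq> 0" shows "T (- int k1, - int k2) (int l1, - int l2) = - ((- real k1 * real l2 - real k2 * real l1) ^ 4 / ((real k1 + real l1) ^ 2 + (real k2 - real l2) ^ 2))"
  by (rule Tc) (use lnz in \<open>simp_all add: cr_def nrm_def madd_def mneg_def power2_eq_square algebra_simps\<close>)

lemma T24: assumes lnz: "l1 \<noteq> 0 \<or> l2 \<noteq> 0" shows "T (- int k1, - int k2) (- int l1, int l2) = - ((- real k1 * real l2 - real k2 * real l1) ^ 4 / ((real k1 - real l1) ^ 2 + (real k2 + real l2) ^ 2))"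
  by (rule Tc) (use lnz in \<open>simp_all add: cr_def nrm_def madd_def mneg_def power2_eq_square algebra_simps\<close>)

lemma T31: assumes lnz: "l1 \<noteq> 0 \<or> l2 \<noteq> 0" shows "T (int k1, - int k2) (int l1, int l2) = - ((- real k1 * real l2 - real k2 * real l1) ^ 4 / ((real k1 - real l1) ^ 2 + (real k2 + real l2) ^ 2))"
  by (rule Tc) (use lnz in \<open>simp_all add: cr_def nrm_def madd_def mneg_def power2_eq_square algebra_simps\<close>)

lemma T32: assumes lnz: "l1 \<noteq> 0 \<or> l2 \<noteq> 0" shows "T (int k1, - int k2) (- int l1, - int l2) = - ((- real k1 * real l2 - real k2 * real l1) ^ 4 / ((real k1 + real l1) ^ 2 + (real k2 - real l2) ^ 2))"
  by (rule Tc) (use lnz in \<open>simp_all add: cr_def nrm_def madd_def mneg_def power2_eq_square algebra_simps\<close>)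

lemma T33: assumes lnz: "l1 \<noteq> 0 \<or> l2 \<noteq> 0" shows "T (int k1, - int k2) (int l1, - int l2) = - ((real k1 * real l2 - real k2 * real l1) ^ 4 / ((real k1 - real l1) ^ 2 + (real k2 - real l2) ^ 2))"
  by (rule Tc) (use lnz in \<open>simp_all add: cr_def nrm_def madd_def mneg_def power2_eq_square algebra_simps\<close>)

lemma T34: assumes lnz: "l1 \<noteq> 0 \<or> l2 \<noteq> 0" shows "T (int k1, - int k2) (- int l1, int l2) = - ((real k1 * real l2 - real k2 * real l1) ^ 4 / ((real k1 + real l1) ^ 2 + (real k2 + real l2) ^ 2))"
  by (rule Tc) (use lnz in \<open>simp_all add: cr_def nrm_def madd_def mneg_def power2_eq_square algebra_simps\<close>)

lemma T41: assumes lnz: "l1 \<noteq> 0 \<or> l2 \<noteq> 0" shows "T (- int k1, int k2) (int l1, int l2) = - ((- real k1 * real l2 - real k2 * real l1) ^ 4 / ((real k1 + real l1) ^ 2 + (real k2 - real l2) ^ 2))"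
  by (rule Tc) (use lnz in \<open>simp_all add: cr_def nrm_def madd_def mneg_def power2_eq_square algebra_simps\<close>)

lemma T42: assumes lnz: "l1 \<noteq> 0 \<or> l2 \<noteq> 0" shows "T (- int k1, int k2) (- int l1, - int l2) = - ((- real k1 * real l2 - real k2 * real l1) ^ 4 / ((real k1 - real l1) ^ 2 + (real k2 + real l2) ^ 2))"
  by (rule Tc) (use lnz in \<open>simp_all add: cr_def nrm_def madd_def mneg_def power2_eq_square algebra_simps\<close>)

lemma T43: assumes lnz: "l1 \<noteq> 0 \<or> l2 \<noteq> 0" shows "T (- int k1, int k2) (int l1, - int l2) = - ((real k1 * real l2 - real k2 * real l1) ^ 4 / ((real k1 + real l1) ^ 2 + (real k2 + real l2) ^ 2))"
  by (rule Tc) (use lnz in \<open>simp_all add: cr_def nrm_def madd_def mneg_def power2_eq_square algebra_simps\<close>)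

lemma T44: assumes lnz: "l1 \<noteq> 0 \<or> l2 \<noteq> 0" shows "T (- int k1, int k2) (- int l1, int l2) = - ((real k1 * real l2 - real k2 * real l1) ^ 4 / ((real k1 - real l1) ^ 2 + (real k2 - real l2) ^ 2))"
  by (rule Tc) (use lnz in \<open>simp_all add: cr_def nrm_def madd_def mneg_def power2_eq_square algebra_simps\<close>)


lemma colsum:
  assumes lnz: "l1 \<noteq> 0 \<or> l2 \<noteq> 0" and n: "n \<in> snd ` set (xiL b l1 l2)"
  shows "(\<Sum>e\<leftarrow>xiL a k1 k2. of_real (T (snd e) n)) = - of_real (FF k1 k2 l1 l2)"
  using n unfolding xiL_def FF_def
  by (auto simp: T11[OF lnz] T12[OF lnz] T13[OF lnz] T14[OF lnz] T21[OF lnz] T22[OF lnz] T23[OF lnz] T24[OF lnz]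
     T31[OF lnz] T32[OF lnz] T33[OF lnz] T34[OF lnz] T41[OF lnz] T42[OF lnz] T43[OF lnz] T44[OF lnz] algebra_simps)

lemma rowsum:
  assumes lnz: "l1 \<noteq> 0 \<or> l2 \<noteq> 0" and m: "m \<in> snd ` set (xiL a k1 k2)"
  shows "(\<Sum>e\<leftarrow>xiL b l1 l2. of_real (T m (snd e))) = - of_real (FF k1 k2 l1 l2)"
  using m unfolding xiL_def FF_def
  by (auto simp: T11[OF lnz] T12[OF lnz] T13[OF lnz] T14[OF lnz] T21[OF lnz] T22[OF lnz] T23[OF lnz] T24[OF lnz]
     T31[OF lnz] T32[OF lnz] T33[OF lnz] T34[OF lnz] T41[OF lnz] T42[OF lnz] T43[OF lnz] T44[OF lnz] algebra_simps)

lemma xiL_uniform: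
  assumes "k2 \<noteq> 0" "e \<in> set (xiL a k1 k2)"
  shows "fst e * coef (xiL a k1 k2) (mneg (snd e)) = a * coef (xiL a k1 k2) (mneg (int k1, int k2))"
  using assms by (cases "k1 = 0") (auto simp: xiL_def mneg_def algebra_simps)

lemma cs2: "((a1::real) * b2 - a2 * b1) ^ 2 \<le> (a1 ^ 2 + a2 ^ 2) * (b1 ^ 2 + b2 ^ 2)"
proof -
  have "(a1 ^ 2 + a2 ^ 2) * (b1 ^ 2 + b2 ^ 2) - (a1 * b2 - a2 * b1) ^ 2 = (a1 * b1 + a2 * b2) ^ 2"
    by (simp add: power2_eq_square algebra_simps)
  moreover have "(a1 * b1 + a2 * b2) ^ 2 \<ge> 0" by simp
  ultimately show ?thesis by linarith
qed

lemma frac_bound: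
  assumes h1: "(X::real) ^ 2 \<le> M * D" and h2: "0 \<le> D"
  shows "X ^ 4 / D \<le> X ^ 2 * M"
proof (cases "D = 0")
  case True
  have "X ^ 2 \<le> 0" using h1 True by simp
  moreover have "X ^ 2 \<ge> 0" by simp
  ultimately have "X ^ 2 = 0" by linarith
  then show ?thesis using True by simp
next
  case False
  then have D: "D > 0" using h2 by simp
  have "X ^ 4 = X ^ 2 * X ^ 2" by (simp add: power2_eq_square power4_eq_xxxx)
  also have "\<dots> \<le> X ^ 2 * (M * D)" by (rule mult_left_mono[OF h1]) simp
  finally have "X ^ 4 \<le> X ^ 2 * M * D" by (simp add: mult.assoc)
  then show ?thesis using D by (simp add: divide_le_eq)
qed

lemma FF_bounds:
  assumes kl1: "k1 \<noteq> l1" and kl2: "k2 \<noteq> l2" and knz: "k1 \<noteq> 0 \<or> k2 \<noteq> 0" and lnz: "l1 \<noteq> 0 \<or> l2 \<noteq> 0"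
  shows "0 < FF k1 k2 l1 l2"
    "FF k1 k2 l1 l2 \<le> 4 * (real k1 ^ 2 + real k2 ^ 2) * (real l1 ^ 2 + real l2 ^ 2) * min (real k1 ^ 2 + real k2 ^ 2) (real l1 ^ 2 + real l2 ^ 2)"
proof -
  define x1 where "x1 = real k1" define x2 where "x2 = real k2"
  define y1 where "y1 = real l1" define y2 where "y2 = real l2"
  define P where "P = x1 * y2 - x2 * y1"
  define Q where "Q = - x1 * y2 - x2 * y1"
  define K where "K = x1 ^ 2 + x2 ^ 2" define L where "L = y1 ^ 2 + y2 ^ 2"
  define D1 where "D1 = (x1 + y1) ^ 2 + (x2 + y2) ^ 2"
  define D2 where "D2 = (x1 - y1) ^ 2 + (x2 - y2) ^ 2"
  define D3 where "D3 = (x1 + y1) ^ 2 + (x2 - y2) ^ 2"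
  define D4 where "D4 = (x1 - y1) ^ 2 + (x2 + y2) ^ 2"
  have FF: "FF k1 k2 l1 l2 = P ^ 4 / D1 + P ^ 4 / D2 + Q ^ 4 / D3 + Q ^ 4 / D4"
    by (simp add: FF_def P_def Q_def D1_def D2_def D3_def D4_def x1_def x2_def y1_def y2_def)
  have d1: "x1 + y1 \<noteq> 0" using kl1 by (simp add: x1_def y1_def)
  have d2: "x1 - y1 \<noteq> 0" using kl1 by (simp add: x1_def y1_def)
  have D1p: "D1 > 0" unfolding D1_def using d1 by (simp add: add_pos_nonneg)
  have D2p: "D2 > 0" unfolding D2_def using d2 by (simp add: add_pos_nonneg)
  have D3p: "D3 > 0" unfolding D3_def using d1 by (simp add: add_pos_nonneg)
  have D4p: "D4 > 0" unfolding D4_def using d2 by (simp add: add_pos_nonneg)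
  have PQ: "P \<noteq> 0 \<or> Q \<noteq> 0"
  proof (rule ccontr)
    assume "\<not> (P \<noteq> 0 \<or> Q \<noteq> 0)"
    then have "P = 0" "Q = 0" by auto
    then have "x1 * y2 = 0" "x2 * y1 = 0" unfolding P_def Q_def by linarith+
    then have "(k1 = 0 \<or> l2 = 0) \<and> (k2 = 0 \<or> l1 = 0)" by (simp add: x1_def x2_def y1_def y2_def)
    then show False using kl1 kl2 knz lnz by auto
  qed
  have nn: "0 \<le> P ^ 4 / D1" "0 \<le> P ^ 4 / D2" "0 \<le> Q ^ 4 / D3" "0 \<le> Q ^ 4 / D4"
    using D1p D2p D3p D4p by (simp_all add: zero_le_even_power)
  show "0 < FF k1 k2 l1 l2"
  proof (cases "P = 0")
    case False
    then have "0 < P ^ 4 / D1" using D1p by simp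
    then show ?thesis unfolding FF using nn by linarith
  next
    case True
    then have "Q \<noteq> 0" using PQ by auto
    then have "0 < Q ^ 4 / D3" using D3p by simp
    then show ?thesis unfolding FF using nn by linarith
  qed
  define M where "M = min K L"
  have K0: "0 \<le> K" "0 \<le> L" by (simp_all add: K_def L_def)
  have b: "X ^ 2 \<le> M * D" if "X ^ 2 \<le> K * D" "X ^ 2 \<le> L * D" for X D
    using that by (cases "K \<le> L") (simp_all add: M_def min_def)
  have P1: "P ^ 2 \<le> M * D1"
  proof (rule b)
    show "P ^ 2 \<le> K * D1" unfolding K_def D1_def using cs2[of x1 "x2 + y2" x2 "x1 + y1"]
      by (simp add: P_def algebra_simps power2_eq_square)
    show "P ^ 2 \<le> L * D1" unfolding L_def D1_def using cs2[of "x1 + y1" y2 "x2 + y2" y1]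
      by (simp add: P_def algebra_simps power2_eq_square)
  qed
  have P2: "P ^ 2 \<le> M * D2"
  proof (rule b)
    show "P ^ 2 \<le> K * D2" unfolding K_def D2_def using cs2[of x1 "x2 - y2" x2 "x1 - y1"]
      by (simp add: P_def algebra_simps power2_eq_square)
    show "P ^ 2 \<le> L * D2" unfolding L_def D2_def using cs2[of "x1 - y1" y2 "x2 - y2" y1]
      by (simp add: P_def algebra_simps power2_eq_square)
  qed
  have Q3: "Q ^ 2 \<le> M * D3"
  proof (rule b)
    show "Q ^ 2 \<le> K * D3" unfolding K_def D3_def using cs2[of x1 "x2 - y2" x2 "x1 + y1"]
      by (simp add: Q_def algebra_simps power2_eq_square)
    show "Q ^ 2 \<le> L * D3" unfolding L_def D3_def using cs2[of "x1 + y1" "- y2" "x2 - y2" y1]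
      by (simp add: Q_def algebra_simps power2_eq_square)
  qed
  have Q4: "Q ^ 2 \<le> M * D4"
  proof (rule b)
    show "Q ^ 2 \<le> K * D4" unfolding K_def D4_def using cs2[of x1 "x2 + y2" x2 "x1 - y1"]
      by (simp add: Q_def algebra_simps power2_eq_square)
    show "Q ^ 2 \<le> L * D4" unfolding L_def D4_def using cs2[of "x1 - y1" "- y2" "x2 + y2" y1]
      by (simp add: Q_def algebra_simps power2_eq_square)
  qed
  have "FF k1 k2 l1 l2 \<le> P ^ 2 * M + P ^ 2 * M + Q ^ 2 * M + Q ^ 2 * M"
    unfolding FF using frac_bound[OF P1] frac_bound[OF P2] frac_bound[OF Q3] frac_bound[OF Q4]
      D1p D2p D3p D4p by (smt (verit))
  also have "\<dots> = 2 * M * (P ^ 2 + Q ^ 2)" by (simp add: algebra_simps)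
  also have "P ^ 2 + Q ^ 2 = 2 * (x1 ^ 2 * y2 ^ 2 + x2 ^ 2 * y1 ^ 2)"
    by (simp add: P_def Q_def power2_eq_square algebra_simps)
  also have "x1 ^ 2 * y2 ^ 2 + x2 ^ 2 * y1 ^ 2 \<le> K * L"
  proof -
    have "K * L = x1 ^ 2 * y2 ^ 2 + x2 ^ 2 * y1 ^ 2 + (x1 ^ 2 * y1 ^ 2 + x2 ^ 2 * y2 ^ 2)"
      by (simp add: K_def L_def algebra_simps)
    moreover have "x1 ^ 2 * y1 ^ 2 + x2 ^ 2 * y2 ^ 2 \<ge> 0" by simp
    ultimately show ?thesis by linarith
  qed
  moreover have "M \<ge> 0" using K0 by (simp add: M_def)
  ultimately have "FF k1 k2 l1 l2 \<le> 2 * M * (2 * (K * L))"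
    by (smt (verit) mult_left_mono mult_nonneg_nonneg)
  then show "FF k1 k2 l1 l2 \<le> 4 * (real k1 ^ 2 + real k2 ^ 2) * (real l1 ^ 2 + real l2 ^ 2) * min (real k1 ^ 2 + real k2 ^ 2) (real l1 ^ 2 + real l2 ^ 2)"
    by (simp add: M_def K_def L_def x1_def x2_def y1_def y2_def algebra_simps)
qed

theorem corollary4:
  fixes k1 k2 l1 l2 :: nat and a b :: complex
  assumes "k1 \<noteq> l1" and "k2 \<noteq> l2"
    and "xi a k1 k2 \<noteq> (\<lambda>_. 0)" and "xi b l1 l2 \<noteq> (\<lambda>_. 0)"
  shows "sec_curv (xi a k1 k2) (xi b l1 l2) =
      - 1 / (4 * S_T * (real k1 ^ 2 + real k2 ^ 2) * (real l1 ^ 2 + real l2 ^ 2)) *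
        ((real k1 * real l2 - real k2 * real l1) ^ 4
            / ((real k1 + real l1) ^ 2 + (real k2 + real l2) ^ 2)
         + (real k1 * real l2 - real k2 * real l1) ^ 4
            / ((real k1 - real l1) ^ 2 + (real k2 - real l2) ^ 2)
         + (- real k1 * real l2 - real k2 * real l1) ^ 4
            / ((real k1 + real l1) ^ 2 + (real k2 - real l2) ^ 2)
         + (- real k1 * real l2 - real k2 * real l1) ^ 4
            / ((real k1 - real l1) ^ 2 + (real k2 + real l2) ^ 2))
    \<and> - min (real k1 ^ 2 + real k2 ^ 2) (real l1 ^ 2 + real l2 ^ 2) / S_T
        \<le> sec_curv (xi a k1 k2) (xi b l1 l2)
    \<and> sec_curv (xi a k1 k2) (xi b l1 l2) < 0"
proof -
  define U where "U = xiL a k1 k2"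
  define V where "V = xiL b l1 l2"
  have u: "xi a k1 k2 = rf U" unfolding U_def by (rule xi_rf)
  have v: "xi b l1 l2 = rf V" unfolding V_def by (rule xi_rf)
  have gU: "goodL U" unfolding U_def by (rule xiL_good)
  have gV: "goodL V" unfolding V_def by (rule xiL_good)
  have knz: "k1 \<noteq> 0 \<or> k2 \<noteq> 0" using assms(3) xi_zero by blast
  have lnz: "l1 \<noteq> 0 \<or> l2 \<noteq> 0" using assms(4) xi_zero by blast
  define K where "K = real k1 ^ 2 + real k2 ^ 2"
  define L where "L = real l1 ^ 2 + real l2 ^ 2"
  have Kp: "K > 0" using knz unfolding K_def by (auto simp: add_pos_nonneg add_nonneg_pos)
  have Lp: "L > 0" using lnz unfolding L_def by (auto simp: add_pos_nonneg add_nonneg_pos)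
  define A where "A = (\<Sum>e\<leftarrow>U. fst e * coef U (mneg (snd e)))"
  define B where "B = (\<Sum>e\<leftarrow>V. fst e * coef V (mneg (snd e)))"
  have A: "Im A = 0" "Re A > 0" using Aa_pos[OF good_real[OF gU]] assms(3) u unfolding A_def by auto
  have B: "Im B = 0" "Re B > 0" using Aa_pos[OF good_real[OF gV]] assms(4) v unfolding B_def by auto
  have ipuu: "ip (rf U) (rf U) = S_T * (K * Re A)"
    unfolding ip_rf[OF good_real[OF gU] good_real[OF gU]] A_def
    by (subst ip_self[where c=K]) (auto simp: U_def K_def xiL_nrm)
  have ipvv: "ip (rf V) (rf V) = S_T * (L * Re B)"
    unfolding ip_rf[OF good_real[OF gV] good_real[OF gV]] B_def
    by (subst ip_self[where c=L]) (auto simp: V_def L_def xiL_nrm)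
  have ipuv: "ip (rf U) (rf V) = 0"
    unfolding ip_rf[OF good_real[OF gU] good_real[OF gV]]
  proof -
    have "coef (comb dotn U V) (0,0) = 0" unfolding U_def V_def
      by (rule ip_cross, rule xiL_cross[OF assms(1)]) assumption+
    then show "S_T * Re (coef (comb dotn U V) (0, 0)) = 0" by simp
  qed
  have ipc: "ip (curv (rf U) (rf V) (rf U)) (rf V) = S_T * Re (NUM U V)" by (rule ip_curv[OF gU gV])
  have NUMr: "NUM U V = (\<Sum>a\<leftarrow>U. fst a * coef U (mneg (snd a)) * (\<Sum>b\<leftarrow>V. fst b * coef V (mneg (snd b)) * of_real (T (snd a) (snd b))))"
    by (rule NUM_reduce) (unfold U_def V_def, rule xiL_cond[OF assms(1,2)], assumption+)
  define F where "F = FF k1 k2 l1 l2"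
  have NUMv: "Re (NUM U V) = - F * Re A * Re B / 4"
  proof (cases "k2 = 0")
    case False
    define W where "W = a * coef U (mneg (int k1, int k2))"
    have unif: "\<And>e. e \<in> set U \<Longrightarrow> fst e * coef U (mneg (snd e)) = W"
      using xiL_uniform[OF False] unfolding U_def W_def by blast
    have "NUM U V = (\<Sum>e\<leftarrow>U. W * (\<Sum>b\<leftarrow>V. fst b * coef V (mneg (snd b)) * of_real (T (snd e) (snd b))))"
      unfolding NUMr by (rule sum_list_cong_set) (simp add: unif)
    also have "\<dots> = W * (\<Sum>b\<leftarrow>V. fst b * coef V (mneg (snd b)) * (\<Sum>e\<leftarrow>U. of_real (T (snd e) (snd b))))"
      by (simp add: sum_list_const_mult sum_list_swap[where A=U] algebra_simps)
    also have "\<dots> = W * (\<Sum>b\<leftarrow>V. fst b * coef V (mneg (snd b)) * (- of_real F))"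
      by (intro arg_cong[where f="\<lambda>z. W * z"] sum_list_cong_set)
         (simp add: U_def V_def F_def colsum[OF lnz imageI])
    also have "\<dots> = - W * of_real F * B" unfolding sum_list_mult_const B_def[symmetric] by simp
    finally have N: "NUM U V = - W * of_real F * B" .
    have AW: "A = 4 * W"
    proof -
      have "A = (\<Sum>e\<leftarrow>U. W)" unfolding A_def by (rule sum_list_cong_set) (rule unif)
      then show ?thesis by (simp add: U_def xiL_def)
    qed
    show ?thesis using B(1) AW unfolding N by (simp add: algebra_simps)
  next
    case True
    then have l2: "l2 \<noteq> 0" using assms(2) by simp
    define W where "W = b * coef V (mneg (int l1, int l2))"
    have unif: "\<And>e. e \<in> set V \<Longrightarrow> fst e * coef V (mneg (snd e)) = W"
      using xiL_uniform[OF l2] unfolding V_def W_def by blast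
    have "NUM U V = (\<Sum>a\<leftarrow>U. fst a * coef U (mneg (snd a)) * (\<Sum>b\<leftarrow>V. W * of_real (T (snd a) (snd b))))"
      unfolding NUMr
      by (rule sum_list_cong_set, rule arg_cong[where f="\<lambda>z. _ * z"], rule sum_list_cong_set) (simp add: unif)
    also have "\<dots> = (\<Sum>a\<leftarrow>U. fst a * coef U (mneg (snd a)) * (W * (- of_real F)))"
      by (rule sum_list_cong_set) (simp add: sum_list_const_mult U_def V_def F_def rowsum[OF lnz imageI])
    also have "\<dots> = - W * of_real F * A" unfolding sum_list_mult_const A_def[symmetric] by simp
    finally have N: "NUM U V = - W * of_real F * A" .
    have BW: "B = 4 * W"
    proof -
      have "B = (\<Sum>e\<leftarrow>V. W)" unfolding B_def by (rule sum_list_cong_set) (rule unif)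
      then show ?thesis by (simp add: V_def xiL_def)
    qed
    show ?thesis using A(1) BW unfolding N by (simp add: algebra_simps)
  qed
  have ST: "S_T > 0" by (simp add: S_T_def)
  have sec: "sec_curv (xi a k1 k2) (xi b l1 l2) = - 1 / (4 * S_T * K * L) * F"
    unfolding sec_curv_def u v ipc ipuu ipvv ipuv NUMv
    using ST Kp Lp A(2) B(2) by (simp add: field_simps power2_eq_square)
  note FB = FF_bounds[OF assms(1,2) knz lnz]
  have eq: "sec_curv (xi a k1 k2) (xi b l1 l2) = - 1 / (4 * S_T * (real k1 ^ 2 + real k2 ^ 2) * (real l1 ^ 2 + real l2 ^ 2)) *
        ((real k1 * real l2 - real k2 * real l1) ^ 4
            / ((real k1 + real l1) ^ 2 + (real k2 + real l2) ^ 2)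
         + (real k1 * real l2 - real k2 * real l1) ^ 4
            / ((real k1 - real l1) ^ 2 + (real k2 - real l2) ^ 2)
         + (- real k1 * real l2 - real k2 * real l1) ^ 4
            / ((real k1 + real l1) ^ 2 + (real k2 - real l2) ^ 2)
         + (- real k1 * real l2 - real k2 * real l1) ^ 4
            / ((real k1 - real l1) ^ 2 + (real k2 + real l2) ^ 2))"
    unfolding sec K_def L_def F_def FF_def ..
  have neg: "sec_curv (xi a k1 k2) (xi b l1 l2) < 0"
    unfolding sec using ST Kp Lp FB(1) F_def by (simp add: field_simps)
  have low: "- min K L / S_T \<le> sec_curv (xi a k1 k2) (xi b l1 l2)"
  proof -
    have "F \<le> 4 * K * L * min K L" using FB(2) unfolding F_def K_def L_def .
    then have f1: "F \<le> min K L * (4 * K * L)" by (simp only: ac_simps)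
    have pos: "0 < 4 * K * L" using Kp Lp by simp
    have f2: "F / (4 * K * L) \<le> min K L" using f1 pos by (simp only: pos_divide_le_eq)
    have f3: "F / (4 * K * L) / S_T \<le> min K L / S_T" by (rule divide_right_mono[OF f2]) (use ST in simp)
    have e: "- 1 / (4 * S_T * K * L) * F = - (F / (4 * K * L) / S_T)" by (simp add: field_simps)
    show ?thesis unfolding sec e using f3 by linarith
  qed
  show ?thesis using eq neg low unfolding K_def L_def by blast
qed

end
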